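(* Let $(P_1,e_1),\dots,(P_\ell,e_\ell)$ be friendly tree patterns and let $n\ge 0$. Then Algorithm S, applied to the set $\mathcal{L}_n=\mathcal{T}_n((P_1,e_1),\dots,(P_\ell,e_\ell))$ and initialized with the right path $T_0\in\mathcal{T}_n$ (the tree in which no vertex has a left child), visits every binary tree from $\mathcal{T}_n((P_1,e_1),\dots,(P_\ell,e_\ell))$ exactly once.
   Context: For $n\ge 0$, $\mathcal{T}_n$ is the set of binary trees with $n$ vertices, labeled $1,\dots,n$ by the search tree property (left-subtree vertices of $i$ are smaller than $i$, right-subtree vertices larger). For a vertex $i$: $c_L(i),c_R(i),p(i)$ are its left child, right child, parent ($\varepsilon$ if nonexistent); $r(T)$ is the root; $T(i)$, $L(i)$, $R(i)$ are the subtrees rooted at $i$, $c_L(i)$, $c_R(i)$. $B_R(i)=\{i,c_R(i),c_R^2(i),\dots\}$ is the vertex set of the right branch starting at $i$, and $B_R^-(i)$ is $B_R(i)$ minus its last vertex. A tree pattern is $(P,e)$ with $P\in\mathcal{T}_k$, $e\colon[k]\setminus\{r(P)\}\to\{0,1\}$. $T\in\mathcal{T}_n$ contains $(P,e)$ if there is an injection $f\colon[k]\to[n]$ such that for every non-root $i$ of $P$: if $e(i)=1$, $f(i)$ is the left (resp. right) child of $f(p(i))$ when $i$ is the left (resp. right) child of $p(i)$; if $e(i)=0$, $f(i)\in L(f(p(i)))$ (resp. $R(f(p(i)))$) when $i$ is the left (resp. right) child of $p(i)$. Otherwise $T$ avoids it. $\mathcal{T}_n((P_1,e_1),\dots,(P_\ell,e_\ell))$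 is the set of trees in $\mathcal{T}_n$ avoiding all $(P_j,e_j)$. A tree pattern $(P,e)$, $P\in\mathcal{T}_k$, is friendly if: (i) $p(k)\neq\varepsilon$ and $c_L(k)\neq\varepsilon$ (the largest vertex $k$ is neither the root nor a leaf); (ii) $e(j)=0$ for every $j\in B_R^-(r(P))\setminus\{r(P)\}$; (iii) if $e(k)=1$ then $e(c_L(k))=0$. Rotations: for a vertex $j$ with $p(j)\ne\varepsilon$ and $j=c_R(p(j))$, set $i=p(j)$, $Y=L(j)$; the up-rotation of $j$ makes $j$ the child of $p(i)$ in place of $i$ (if $p(i)\ne\varepsilon$), makes $i$ the left child of $j$ and $Y$ the right subtree of $i$. The down-rotation of $j$ is its inverse and is defined iff $c_L(j)\ne\varepsilon$. An up-slide (down-slide) of $j$ by $d$ steps is a sequence of $d$ up-rotations (down-rotations) of $j$. For a set $\mathcal{L}_n\subseteq\mathcal{T}_n$, a slide producing a tree in $\mathcal{L}_n$ is minimal if every slide of the same vertex in the same direction by fewer steps produces a tree not in $\mathcal{L}_n$. Algorithm S (on $\mathcal{L}_n$, initial tree $T_0\in\mathcal{L}_n$): S1. Visit $T_0$. S2. Generate an unvisited tree from $\mathcal{L}_n$ by performing a minimal slide of the largest possible vertex in the most recently visited tree; if no such slide exists, or the direction of the slide is ambiguous, terminate; otherwise visit this tree and repeat S2. *)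

theory Defs
  imports Main "HOL-Library.Tree"
begin

text \<open>The set
 T_n of binary trees with n vertices labelled 1..n by the search tree property
 is the set of trees whose in-order traversal is [1,...,n].\<close>

definition Tn :: "nat \<Rightarrow> nat tree set" where
  "Tn n = {t. inorder t = [1..<Suc n]}"

fun subtree_at :: "nat tree \<Rightarrow> nat \<Rightarrow> nat tree" where
  "subtree_at Leaf i = Leaf"
| "subtree_at (Node l x r) i =
     (if x = i then Node l x r
      else if i \<in> set_tree l then subtree_at l i else subtree_at r i)"

definition root_of :: "nat tree \<Rightarrow> nat option" where
  "root_of t = (case t of Leaf \<Rightarrow> None | Node _ a _ \<Rightarrow> Some a)"

definition Lsub :: "nat tree \<Rightarrow> nat \<Rightarrow> nat tree" where
  "Lsub t i = (case subtree_at t i of Leaf \<Rightarrow> Leaf | Node l _ _ \<Rightarrow> l)"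

definition Rsub :: "nat tree \<Rightarrow> nat \<Rightarrow> nat tree" where
  "Rsub t i = (case subtree_at t i of Leaf \<Rightarrow> Leaf | Node _ _ r \<Rightarrow> r)"

text \<open>Left / right child (None plays the role of epsilon).\<close>
definition cL :: "nat tree \<Rightarrow> nat \<Rightarrow> nat option" where
  "cL t i = root_of (Lsub t i)"

definition cR :: "nat tree \<Rightarrow> nat \<Rightarrow> nat option" where
  "cR t i = root_of (Rsub t i)"

definition has_parent :: "nat tree \<Rightarrow> nat \<Rightarrow> bool" where
  "has_parent t i \<longleftrightarrow> (\<exists>p. cL t p = Some i \<or> cR t p = Some i)"

fun rbranch :: "nat tree \<Rightarrow> nat list" where
  "rbranch Leaf = []"
| "rbranch (Node l a r) = a # rbranch r"

text \<open>A tree pattern (P,e); e is only relevant on non-root vertices of P;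
  e i = True means e(i)=1, False means e(i)=0.\<close>
type_synonym pattern = "nat tree \<times> (nat \<Rightarrow> bool)"

definition is_pattern :: "pattern \<Rightarrow> bool" where
  "is_pattern pe \<longleftrightarrow> fst pe \<in> Tn (length (inorder (fst pe)))"

definition contains :: "nat tree \<Rightarrow> pattern \<Rightarrow> bool" where
  "contains T pe \<longleftrightarrow> (case pe of (P, e) \<Rightarrow>
     (\<exists>f. inj_on f (set_tree P) \<and> f ` set_tree P \<subseteq> set_tree T \<and>
       (\<forall>p i. cL P p = Some i \<longrightarrow>
          (if e i then cL T (f p) = Some (f i) else f i \<in> set_tree (Lsub T (f p)))) \<and>
       (\<forall>p i. cR P p = Some i \<longrightarrow>
          (if e i then cR T (f p) = Some (f i) else f i \<in> set_tree (Rsub T (f p))))))"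

definition avoiding :: "nat \<Rightarrow> pattern list \<Rightarrow> nat tree set" where
  "avoiding n pats = {T \<in> Tn n. \<forall>pe \<in> set pats. \<not> contains T pe}"

definition friendly :: "pattern \<Rightarrow> bool" where
  "friendly pe \<longleftrightarrow> (case pe of (P, e) \<Rightarrow>
     (let k = length (inorder P) in
       is_pattern pe \<and>
       has_parent P k \<and> cL P k \<noteq> None \<and>
       (\<forall>j \<in> set (butlast (rbranch P)) - set_option (root_of P). \<not> e j) \<and>
       (e k \<longrightarrow> (\<forall>c. cL P k = Some c \<longrightarrow> \<not> e c))))"

text \<open>Up-rotation of vertex j (defined iff j is a right child).\<close>
fun rot_up :: "nat \<Rightarrow> nat tree \<Rightarrow> nat tree option" where
  "rot_up j Leaf = None"
| "rot_up j (Node l x r) =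
     (if x = j then None
      else if j \<in> set_tree l then map_option (\<lambda>l'. Node l' x r) (rot_up j l)
      else (case r of Leaf \<Rightarrow> None
            | Node y c z \<Rightarrow>
                (if c = j then Some (Node (Node l x y) j z)
                 else map_option (\<lambda>r'. Node l x r') (rot_up j r))))"

text \<open>Down-rotation of vertex j (defined iff j has a left child).\<close>
fun rot_down :: "nat \<Rightarrow> nat tree \<Rightarrow> nat tree option" where
  "rot_down j Leaf = None"
| "rot_down j (Node l x r) =
     (if x = j then (case l of Leaf \<Rightarrow> None | Node a i y \<Rightarrow> Some (Node a i (Node y j r)))
      else if j \<in> set_tree l then map_option (\<lambda>l'. Node l' x r) (rot_down j l)
      else map_option (\<lambda>r'. Node l x r') (rot_down j r))"

text \<open>Direction: True = up, False = down.\<close>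
definition rot :: "bool \<Rightarrow> nat \<Rightarrow> nat tree \<Rightarrow> nat tree option" where
  "rot up j t = (if up then rot_up j t else rot_down j t)"

fun slide :: "bool \<Rightarrow> nat \<Rightarrow> nat \<Rightarrow> nat tree \<Rightarrow> nat tree option" where
  "slide up j 0 t = Some t"
| "slide up j (Suc d) t = (case rot up j t of None \<Rightarrow> None | Some t' \<Rightarrow> slide up j d t')"

definition minimal_slide ::
  "nat tree set \<Rightarrow> bool \<Rightarrow> nat \<Rightarrow> nat tree \<Rightarrow> nat tree \<Rightarrow> bool" where
  "minimal_slide L up j T T' \<longleftrightarrow>
     (\<exists>d \<ge> 1. slide up j d T = Some T' \<and> T' \<in> L \<and>
        (\<forall>d'. 1 \<le> d' \<and> d' < d \<longrightarrow> (\<forall>t. slide up j d' T = Some t \<longrightarrow> t \<notin> L)))"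

text \<open>Algorithm S.  V is the list of trees visited so far (in order); the most
  recently visited tree is last V.\<close>
definition S_cand :: "nat tree set \<Rightarrow> nat tree list \<Rightarrow> nat \<Rightarrow> bool \<Rightarrow> nat tree \<Rightarrow> bool" where
  "S_cand L V j up T' \<longleftrightarrow> minimal_slide L up j (last V) T' \<and> T' \<notin> set V"

definition S_good :: "nat tree set \<Rightarrow> nat tree list \<Rightarrow> nat \<Rightarrow> bool" where
  "S_good L V j \<longleftrightarrow> (\<exists>up T'. S_cand L V j up T')"

definition S_largest :: "nat tree set \<Rightarrow> nat tree list \<Rightarrow> nat \<Rightarrow> bool" where
  "S_largest L V j \<longleftrightarrow> S_good L V j \<and> (\<forall>j'. S_good L V j' \<longrightarrow> j' \<le> j)"

definition S_step :: "nat tree set \<Rightarrow> nat tree list \<Rightarrow> nat tree \<Rightarrow> bool" where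
  "S_step L V T' \<longleftrightarrow>
     (\<exists>j. S_largest L V j \<and>
        (\<exists>up. S_cand L V j up T' \<and> \<not> (\<exists>T''. S_cand L V j (\<not> up) T'')))"

definition S_stop :: "nat tree set \<Rightarrow> nat tree list \<Rightarrow> bool" where
  "S_stop L V \<longleftrightarrow>
     (\<forall>j. \<not> S_good L V j) \<or>
     (\<exists>j. S_largest L V j \<and> (\<exists>T1 T2. S_cand L V j True T1 \<and> S_cand L V j False T2))"

definition S_run :: "nat tree set \<Rightarrow> nat tree \<Rightarrow> nat tree list \<Rightarrow> bool" where
  "S_run L T0 xs \<longleftrightarrow>
     xs \<noteq> [] \<and> hd xs = T0 \<and>
     (\<forall>i. Suc i < length xs \<longrightarrow> S_step L (take (Suc i) xs) (xs ! Suc i)) \<and>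
     S_stop L xs"

end

theory Submission
  imports Defs
begin

abbreviation dist :: "nat tree \<Rightarrow> bool" where "dist t \<equiv> distinct (inorder t)"

lemma root_of_simps[simp]: "root_of Leaf = None" "root_of (Node l a r) = Some a"
  by (simp_all add: root_of_def)

lemma subtree_at_notin[simp]: "i \<notin> set_tree t \<Longrightarrow> subtree_at t i = Leaf"
  by (induction t) auto

lemma set_subtree_at: "set_tree (subtree_at t i) \<subseteq> set_tree t"
  by (induction t) auto

lemma subtree_at_root: "i \<in> set_tree t \<Longrightarrow> \<exists>l r. subtree_at t i = Node l i r"
  by (induction t) auto

lemma self_in_subtree: "i \<in> set_tree t \<Longrightarrow> i \<in> set_tree (subtree_at t i)"
  using subtree_at_root by fastforce

lemma dist_subtree_at: "dist t \<Longrightarrow> dist (subtree_at t i)"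
  by (induction t) auto

lemma subtree_at_trans:
  "dist t \<Longrightarrow> v \<in> set_tree (subtree_at t u) \<Longrightarrow> subtree_at t v = subtree_at (subtree_at t u) v"
proof (induction t)
  case Leaf then show ?case by simp
next
  case (Node l x r)
  show ?case
  proof (cases "x = u")
    case True then show ?thesis by simp
  next
    case xu: False
    show ?thesis
    proof (cases "u \<in> set_tree l")
      case True
      with Node xu have v: "v \<in> set_tree (subtree_at l u)" by simp
      hence "v \<in> set_tree l" using set_subtree_at by blast
      moreover have "x \<notin> set_tree l" using Node.prems by simp
      ultimately show ?thesis using Node True xu v by auto
    next
      case ul: False
      with Node xu have v: "v \<in> set_tree (subtree_at r u)" by simp
      hence "v \<in> set_tree r" using set_subtree_at by blast
      moreover have "x \<notin> set_tree r" "set_tree l \<inter> set_tree r = {}" using Node.prems by auto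
      ultimately show ?thesis using Node ul xu v by auto
    qed
  qed
qed

lemma Lsub_Node[simp]: "Lsub (Node l x r) x = l" by (simp add: Lsub_def)
lemma Rsub_Node[simp]: "Rsub (Node l x r) x = r" by (simp add: Rsub_def)

lemma Lsub_notin[simp]: "u \<notin> set_tree t \<Longrightarrow> Lsub t u = Leaf" by (simp add: Lsub_def)
lemma Rsub_notin[simp]: "u \<notin> set_tree t \<Longrightarrow> Rsub t u = Leaf" by (simp add: Rsub_def)

lemma Lsub_Node_l: "u \<in> set_tree l \<Longrightarrow> u \<noteq> x \<Longrightarrow> Lsub (Node l x r) u = Lsub l u"
  by (simp add: Lsub_def)
lemma Rsub_Node_l: "u \<in> set_tree l \<Longrightarrow> u \<noteq> x \<Longrightarrow> Rsub (Node l x r) u = Rsub l u"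
  by (simp add: Rsub_def)
lemma Lsub_Node_r: "u \<notin> set_tree l \<Longrightarrow> u \<noteq> x \<Longrightarrow> Lsub (Node l x r) u = Lsub r u"
  by (simp add: Lsub_def)
lemma Rsub_Node_r: "u \<notin> set_tree l \<Longrightarrow> u \<noteq> x \<Longrightarrow> Rsub (Node l x r) u = Rsub r u"
  by (simp add: Rsub_def)

lemma Lsub_sub: "set_tree (Lsub t u) \<subseteq> set_tree (subtree_at t u)"
  by (auto simp: Lsub_def split: tree.splits)
lemma Rsub_sub: "set_tree (Rsub t u) \<subseteq> set_tree (subtree_at t u)"
  by (auto simp: Rsub_def split: tree.splits)

lemma Lsub_in:
  assumes "dist t" "v \<in> set_tree (Lsub t u)"
  shows "set_tree (subtree_at t v) \<subseteq> set_tree (Lsub t u)"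
proof -
  have u: "u \<in> set_tree t" using assms(2) by (cases "u \<in> set_tree t") auto
  then obtain l r where s: "subtree_at t u = Node l u r" using subtree_at_root by blast
  have d: "dist (Node l u r)" using dist_subtree_at[OF assms(1), of u] s by simp
  have vl: "v \<in> set_tree l" using assms(2) s by (simp add: Lsub_def)
  have "v \<in> set_tree (subtree_at t u)" using s vl by simp
  hence "subtree_at t v = subtree_at (Node l u r) v" using subtree_at_trans[OF assms(1), of v u] s by argo
  also have "\<dots> = subtree_at l v" using vl d by auto
  finally show ?thesis using set_subtree_at s by (simp add: Lsub_def)
qed

lemma Rsub_in:
  assumes "dist t" "v \<in> set_tree (Rsub t u)"
  shows "set_tree (subtree_at t v) \<subseteq> set_tree (Rsub t u)"
proof -
  have u: "u \<in> set_tree t" using assms(2) by (cases "u \<in> set_tree t") auto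
  then obtain l r where s: "subtree_at t u = Node l u r" using subtree_at_root by blast
  have d: "dist (Node l u r)" using dist_subtree_at[OF assms(1), of u] s by simp
  have vl: "v \<in> set_tree r" using assms(2) s by (simp add: Rsub_def)
  have "v \<in> set_tree (subtree_at t u)" using s vl by simp
  hence "subtree_at t v = subtree_at (Node l u r) v" using subtree_at_trans[OF assms(1), of v u] s by argo
  also have "\<dots> = subtree_at r v" using vl d by auto
  finally show ?thesis using set_subtree_at s by (simp add: Rsub_def)
qed

lemma cL_in: "cL t u = Some v \<Longrightarrow> v \<in> set_tree (Lsub t u)"
  by (cases "Lsub t u") (auto simp: cL_def)
lemma cR_in: "cR t u = Some v \<Longrightarrow> v \<in> set_tree (Rsub t u)"
  by (cases "Rsub t u") (auto simp: cR_def)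

lemma cL_sub:
  assumes "dist t" "cL t u = Some v" shows "subtree_at t v = Lsub t u"
proof -
  obtain a b where Ls: "Lsub t u = Node a v b" using assms(2) by (cases "Lsub t u") (auto simp: cL_def)
  hence u: "u \<in> set_tree t" by (cases "u \<in> set_tree t") auto
  then obtain l r where s: "subtree_at t u = Node l u r" using subtree_at_root by blast
  have d: "dist (Node l u r)" using dist_subtree_at[OF assms(1), of u] s by simp
  have l: "l = Node a v b" using Ls s by (simp add: Lsub_def)
  have "subtree_at t v = subtree_at (Node l u r) v" using subtree_at_trans[OF assms(1), of v u] s l by simp
  also have "\<dots> = l" using d l by auto
  finally show ?thesis using s by (simp add: Lsub_def)
qed

lemma cR_sub:
  assumes "dist t" "cR t u = Some v" shows "subtree_at t v = Rsub t u"
proof -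
  obtain a b where Ls: "Rsub t u = Node a v b" using assms(2) by (cases "Rsub t u") (auto simp: cR_def)
  hence u: "u \<in> set_tree t" by (cases "u \<in> set_tree t") auto
  then obtain l r where s: "subtree_at t u = Node l u r" using subtree_at_root by blast
  have d: "dist (Node l u r)" using dist_subtree_at[OF assms(1), of u] s by simp
  have l: "r = Node a v b" using Ls s by (simp add: Rsub_def)
  have "subtree_at t v = subtree_at (Node l u r) v" using subtree_at_trans[OF assms(1), of v u] s l by simp
  also have "\<dots> = r" using d l by auto
  finally show ?thesis using s by (simp add: Rsub_def)
qed

definition emb :: "nat tree \<Rightarrow> nat tree \<Rightarrow> (nat \<Rightarrow> bool) \<Rightarrow> (nat \<Rightarrow> nat) \<Rightarrow> bool" where
 "emb T P e f \<longleftrightarrow> inj_on f (set_tree P) \<and> f ` set_tree P \<subseteq> set_tree T \<and>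
    (\<forall>p i. cL P p = Some i \<longrightarrow> (if e i then cL T (f p) = Some (f i) else f i \<in> set_tree (Lsub T (f p)))) \<and>
    (\<forall>p i. cR P p = Some i \<longrightarrow> (if e i then cR T (f p) = Some (f i) else f i \<in> set_tree (Rsub T (f p))))"

lemma contains_emb: "contains T (P,e) \<longleftrightarrow> (\<exists>f. emb T P e f)"
  by (simp add: contains_def emb_def)

lemma emb_L: "emb T P e f \<Longrightarrow> cL P p = Some i \<Longrightarrow> f i \<in> set_tree (Lsub T (f p))"
  unfolding emb_def by (metis cL_in)
lemma emb_R: "emb T P e f \<Longrightarrow> cR P p = Some i \<Longrightarrow> f i \<in> set_tree (Rsub T (f p))"
  unfolding emb_def by (metis cR_in)

lemma emb_sub:
  assumes P: "dist P" and T: "dist T" and E: "emb T P e f"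
  shows "s = subtree_at P p \<Longrightarrow> p \<in> set_tree P \<Longrightarrow> q \<in> set_tree s \<Longrightarrow> f q \<in> set_tree (subtree_at T (f p))"
proof (induction s arbitrary: p q)
  case Leaf then show ?case by simp
next
  case (Node l x r)
  obtain l' r' where s': "subtree_at P p = Node l' p r'" using subtree_at_root Node.prems(2) by blast
  have x: "x = p" and ll: "l = l'" and rr: "r = r'" using s' Node.prems(1) by auto
  have d: "dist (Node l p r)" using dist_subtree_at[OF P, of p] s' ll rr by simp
  have fp: "f p \<in> set_tree T" using E Node.prems(2) by (auto simp: emb_def)
  consider "q = p" | "q \<in> set_tree l" | "q \<in> set_tree r" using Node.prems(3) x by auto
  then show ?case
  proof cases
    case 1 then show ?thesis using fp self_in_subtree by simp
  next
    case 2
    then obtain l1 c l2 where l: "l = Node l1 c l2" by (cases l) auto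
    have Lp: "Lsub P p = l" using s' ll by (simp add: Lsub_def)
    hence cLp: "cL P p = Some c" by (simp add: cL_def l)
    have sc: "subtree_at P c = l" using cL_sub[OF P cLp] Lp by simp
    have c_in: "c \<in> set_tree P" using Lp Lsub_sub[of P p] set_subtree_at[of P p] l by auto
    have "f q \<in> set_tree (subtree_at T (f c))" using Node.IH(1)[OF sc[symmetric] c_in] 2 by simp
    moreover have "f c \<in> set_tree (Lsub T (f p))" using emb_L[OF E cLp] .
    ultimately have "f q \<in> set_tree (Lsub T (f p))" using Lsub_in[OF T] by blast
    then show ?thesis using Lsub_sub by blast
  next
    case 3
    then obtain l1 c l2 where l: "r = Node l1 c l2" by (cases r) auto
    have Lp: "Rsub P p = r" using s' rr by (simp add: Rsub_def)
    hence cLp: "cR P p = Some c" by (simp add: cR_def l)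
    have sc: "subtree_at P c = r" using cR_sub[OF P cLp] Lp by simp
    have c_in: "c \<in> set_tree P" using Lp Rsub_sub[of P p] set_subtree_at[of P p] l by auto
    have "f q \<in> set_tree (subtree_at T (f c))" using Node.IH(2)[OF sc[symmetric] c_in] 3 by simp
    moreover have "f c \<in> set_tree (Rsub T (f p))" using emb_R[OF E cLp] .
    ultimately have "f q \<in> set_tree (Rsub T (f p))" using Rsub_in[OF T] by blast
    then show ?thesis using Rsub_sub by blast
  qed
qed

lemma emb_Lsub:
  assumes P: "dist P" and T: "dist T" and E: "emb T P e f" and q: "q \<in> set_tree (Lsub P p)"
  shows "f q \<in> set_tree (Lsub T (f p))"
proof -
  obtain l1 c l2 where l: "Lsub P p = Node l1 c l2" using q by (cases "Lsub P p") auto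
  hence cLp: "cL P p = Some c" by (simp add: cL_def)
  have sc: "subtree_at P c = Lsub P p" using cL_sub[OF P cLp] .
  have p_in: "p \<in> set_tree P" using q by (cases "p \<in> set_tree P") auto
  have c_in: "c \<in> set_tree P" using Lsub_sub[of P p] set_subtree_at[of P p] l by auto
  have "f q \<in> set_tree (subtree_at T (f c))" using emb_sub[OF P T E sc[symmetric] c_in q] .
  moreover have "f c \<in> set_tree (Lsub T (f p))" using emb_L[OF E cLp] .
  ultimately show ?thesis using Lsub_in[OF T] by blast
qed

lemma emb_Rsub:
  assumes P: "dist P" and T: "dist T" and E: "emb T P e f" and q: "q \<in> set_tree (Rsub P p)"
  shows "f q \<in> set_tree (Rsub T (f p))"
proof -
  obtain l1 c l2 where l: "Rsub P p = Node l1 c l2" using q by (cases "Rsub P p") auto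
  hence cLp: "cR P p = Some c" by (simp add: cR_def)
  have sc: "subtree_at P c = Rsub P p" using cR_sub[OF P cLp] .
  have c_in: "c \<in> set_tree P" using Rsub_sub[of P p] set_subtree_at[of P p] l by auto
  have "f q \<in> set_tree (subtree_at T (f c))" using emb_sub[OF P T E sc[symmetric] c_in q] .
  moreover have "f c \<in> set_tree (Rsub T (f p))" using emb_R[OF E cLp] .
  ultimately show ?thesis using Rsub_in[OF T] by blast
qed



lemma set_rbranch: "set (rbranch t) \<subseteq> set_tree t" by (induction t) auto

lemma RB1: "dist P \<Longrightarrow> q \<in> set_tree P \<Longrightarrow> q \<in> set (rbranch P) \<or> (\<exists>w. q \<in> set_tree (Lsub P w))"
proof (induction P)
  case Leaf thus ?case by simp
next
  case (Node l x r)
  consider "q = x" | "q \<in> set_tree l" | "q \<in> set_tree r" "q \<noteq> x" "q \<notin> set_tree l" using Node.prems by auto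
  then show ?case
  proof cases
    case 1 thus ?thesis by simp
  next
    case 2 thus ?thesis by (metis Lsub_Node)
  next
    case 3
    from Node.IH(2) 3 Node.prems(1) have "q \<in> set (rbranch r) \<or> (\<exists>w. q \<in> set_tree (Lsub r w))" by simp
    thus ?thesis
    proof
      assume "q \<in> set (rbranch r)" thus ?thesis by simp
    next
      assume "\<exists>w. q \<in> set_tree (Lsub r w)"
      then obtain w where w: "q \<in> set_tree (Lsub r w)" by blast
      hence wr: "w \<in> set_tree r" by (cases "w \<in> set_tree r") auto
      hence "w \<noteq> x" "w \<notin> set_tree l" using Node.prems(1) by auto
      hence "Lsub (Node l x r) w = Lsub r w" by (simp add: Lsub_Node_r)
      thus ?thesis using w by metis
    qed
  qed
qed

lemma RB2: "dist T \<Longrightarrow> v \<in> set (rbranch T) \<Longrightarrow> v \<notin> set_tree (Lsub T u)"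
proof (induction T)
  case Leaf thus ?case by simp
next
  case (Node l x r)
  have vr: "v = x \<or> v \<in> set_tree r" "v \<notin> set_tree l" using Node.prems set_rbranch by auto
  consider "u = x" | "u \<in> set_tree l" "u \<noteq> x" | "u \<in> set_tree r" "u \<noteq> x" "u \<notin> set_tree l"
    | "u \<notin> set_tree (Node l x r)" by auto
  then show ?case
  proof cases
    case 1 thus ?thesis using vr by simp
  next
    case 2 thus ?thesis using vr Lsub_sub[of l u] set_subtree_at[of l u] by (auto simp: Lsub_Node_l)
  next
    case 3
    show ?thesis
    proof (cases "v = x")
      case True thus ?thesis using 3 Node.prems Lsub_sub[of r u] set_subtree_at[of r u] by (auto simp: Lsub_Node_r)
    next
      case False thus ?thesis using 3 Node by (auto simp: Lsub_Node_r)
    qed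
  next
    case 4 thus ?thesis by simp
  qed
qed

lemma root_notin_sub:
  assumes "dist (Node l x r)"
  shows "x \<notin> set_tree (Lsub (Node l x r) w) \<and> x \<notin> set_tree (Rsub (Node l x r) w)"
proof -
  consider "w = x" | "w \<in> set_tree l" "w \<noteq> x" | "w \<in> set_tree r" "w \<noteq> x" "w \<notin> set_tree l"
    | "w \<notin> set_tree (Node l x r)" by auto
  then show ?thesis
  proof cases
    case 1 thus ?thesis using assms by simp
  next
    case 2 thus ?thesis using assms Lsub_sub[of l w] set_subtree_at[of l w] Rsub_sub[of l w]
      by (auto simp: Lsub_Node_l Rsub_Node_l)
  next
    case 3 thus ?thesis using assms Lsub_sub[of r w] set_subtree_at[of r w] Rsub_sub[of r w]
      by (auto simp: Lsub_Node_r Rsub_Node_r)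
  next
    case 4 thus ?thesis by simp
  qed
qed

lemma cR_Node: "cR (Node l x r) y = (if y = x then root_of r else if y \<in> set_tree l then cR l y else cR r y)"
  by (simp add: cR_def Rsub_def)
lemma cL_Node: "cL (Node l x r) y = (if y = x then root_of l else if y \<in> set_tree l then cL l y else cL r y)"
  by (simp add: cL_def Lsub_def)

lemma cR_in_set: "cR t p = Some i \<Longrightarrow> i \<in> set_tree t \<and> p \<in> set_tree t"
  using cR_in[of t p i] Rsub_sub[of t p] set_subtree_at[of t p] by (cases "p \<in> set_tree t") auto
lemma cL_in_set: "cL t p = Some i \<Longrightarrow> i \<in> set_tree t \<and> p \<in> set_tree t"
  using cL_in[of t p i] Lsub_sub[of t p] set_subtree_at[of t p] by (cases "p \<in> set_tree t") auto

lemma root_not_cR: "dist t \<Longrightarrow> cR t p = Some i \<Longrightarrow> root_of t \<noteq> Some i"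
proof (cases t)
  case (Node l x r)
  assume "dist t" "cR t p = Some i"
  thus ?thesis using root_notin_sub[of l x r p] cR_in[of t p i] Node by auto
qed simp

lemma cR_unique: "dist t \<Longrightarrow> cR t p = Some i \<Longrightarrow> cR t p' = Some i \<Longrightarrow> p = p'"
proof (induction t arbitrary: p p')
  case Leaf thus ?case by (simp add: cR_def)
next
  case (Node l x r)
  have d: "dist l" "dist r" "x \<notin> set_tree l" "x \<notin> set_tree r" "set_tree l \<inter> set_tree r = {}"
    using Node.prems(1) by auto
  have A: "\<And>y. cR (Node l x r) y = Some i \<Longrightarrow>
     (y = x \<and> root_of r = Some i) \<or> (y \<noteq> x \<and> y \<in> set_tree l \<and> cR l y = Some i) \<or>
     (y \<noteq> x \<and> y \<notin> set_tree l \<and> cR r y = Some i)"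
    by (auto simp: cR_Node split: if_splits)
  have rr: "\<And>y. root_of r = Some i \<Longrightarrow> cR r y = Some i \<Longrightarrow> False"
    using root_not_cR d(2) by blast
  have ri: "root_of r = Some i \<Longrightarrow> i \<in> set_tree r" by (cases r) auto
  have il: "\<And>y. cR l y = Some i \<Longrightarrow> i \<in> set_tree l" using cR_in_set by blast
  have ir: "\<And>y. cR r y = Some i \<Longrightarrow> i \<in> set_tree r" using cR_in_set by blast
  from A[OF Node.prems(2)] A[OF Node.prems(3)] show ?case
    apply (elim disjE conjE)
    using Node.IH d rr ri il ir by blast+
qed

lemma last_rbranch: "dist P \<Longrightarrow> q \<in> set (rbranch P) \<Longrightarrow> cR P q = None \<Longrightarrow> q = last (rbranch P)"
proof (induction P)
  case Leaf thus ?case by simp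
next
  case (Node l x r)
  show ?case
  proof (cases "q = x")
    case True
    with Node.prems have "r = Leaf" by (cases r) (auto simp: cR_Node)
    thus ?thesis using True by simp
  next
    case False
    hence qr: "q \<in> set (rbranch r)" using Node.prems by simp
    hence "q \<in> set_tree r" using set_rbranch by blast
    hence "q \<notin> set_tree l" using Node.prems(1) by auto
    hence "cR r q = None" using Node.prems(3) False by (simp add: cR_Node)
    hence "q = last (rbranch r)" using Node.IH(2) Node.prems(1) qr by simp
    thus ?thesis using qr by auto
  qed
qed

lemma last_rbranch_inorder: "t \<noteq> Leaf \<Longrightarrow> last (rbranch t) = last (inorder t)"
proof (induction t)
  case (Node l x r) thus ?case by (cases r) auto
qed simp

abbreviation srt :: "nat tree \<Rightarrow> bool" where "srt t \<equiv> sorted_wrt (<) (inorder t)"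

lemma srt_subtree: "srt t \<Longrightarrow> srt (subtree_at t i)"
  by (induction t) (auto simp: sorted_wrt_append)

lemma Lsub_less: assumes "srt t" "i \<in> set_tree (Lsub t p)" shows "i < p"
proof -
  have "p \<in> set_tree t" using assms(2) by (cases "p \<in> set_tree t") auto
  then obtain l r where s: "subtree_at t p = Node l p r" using subtree_at_root by blast
  have "srt (Node l p r)" using srt_subtree[OF assms(1), of p] s by simp
  thus ?thesis using assms(2) s by (auto simp: Lsub_def sorted_wrt_append)
qed

lemma Rsub_greater: assumes "srt t" "i \<in> set_tree (Rsub t p)" shows "p < i"
proof -
  have "p \<in> set_tree t" using assms(2) by (cases "p \<in> set_tree t") auto
  then obtain l r where s: "subtree_at t p = Node l p r" using subtree_at_root by blast
  have "srt (Node l p r)" using srt_subtree[OF assms(1), of p] s by simp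
  thus ?thesis using assms(2) s by (auto simp: Rsub_def sorted_wrt_append)
qed



fun ins :: "nat \<Rightarrow> nat \<Rightarrow> nat tree \<Rightarrow> nat tree" where
  "ins n 0 t = Node t n Leaf"
| "ins n (Suc i) Leaf = Node Leaf n Leaf"
| "ins n (Suc i) (Node l x r) = Node l x (ins n i r)"

fun del :: "nat tree \<Rightarrow> nat tree" where
  "del Leaf = Leaf"
| "del (Node l x Leaf) = l"
| "del (Node l x (Node a b c)) = Node l x (del (Node a b c))"

abbreviation rl :: "nat tree \<Rightarrow> nat" where "rl t \<equiv> length (rbranch t)"

lemma set_ins[simp]: "set_tree (ins n i t) = insert n (set_tree t)"
  by (induction n i t rule: ins.induct) auto

lemma inorder_ins: "i \<le> rl t \<Longrightarrow> inorder (ins n i t) = inorder t @ [n]"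
  by (induction n i t rule: ins.induct) auto

lemma rl_ins: "i \<le> rl t \<Longrightarrow> rl (ins n i t) = Suc i"
  by (induction n i t rule: ins.induct) auto

lemma ins_not_Leaf[simp]: "ins n i t \<noteq> Leaf"
  by (cases "(n,i,t)" rule: ins.cases) auto

lemma del_ins: "i \<le> rl t \<Longrightarrow> del (ins n i t) = t"
proof (induction n i t rule: ins.induct)
  case (3 n i l x r)
  obtain a b c where "ins n i r = Node a b c" using ins_not_Leaf by (cases "ins n i r") auto
  thus ?case using 3 by simp
qed auto

lemma ins_inj: "i \<le> rl t \<Longrightarrow> i' \<le> rl t' \<Longrightarrow> ins n i t = ins n i' t' \<Longrightarrow> i = i' \<and> t = t'"
  by (metis del_ins rl_ins Suc_inject)

lemma n_rbranch_ins: "n \<in> set (rbranch (ins n i t))"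
  by (induction n i t rule: ins.induct) auto

lemma ins_decomp: "T \<noteq> Leaf \<Longrightarrow> T = ins (last (inorder T)) (rl T - 1) (del T) \<and> rl T - 1 \<le> rl (del T)"
proof (induction T rule: del.induct)
  case (3 l x a b c)
  have "rl (Node a b c) - 1 = rl (Node a b c) - 1" by simp
  then show ?case using 3 by (cases "rl (Node a b c)") auto
qed auto

lemma root_ins: "j \<le> rl r \<Longrightarrow> root_of (ins n j r) = (if j = 0 then Some n else root_of r)"
  by (cases "(n,j,r)" rule: ins.cases) auto

lemma sub_ins: "i \<le> rl t \<Longrightarrow> u \<in> set_tree t \<Longrightarrow> n \<notin> set_tree t \<Longrightarrow>
  subtree_at (ins n i t) u = subtree_at t u \<or>
  (\<exists>j l r. subtree_at t u = Node l u r \<and> subtree_at (ins n i t) u = Node l u (ins n j r) \<and> j \<le> rl r)"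
proof (induction n i t rule: ins.induct)
  case (1 n t) thus ?case by auto
next
  case (2 n i) thus ?case by simp
next
  case (3 n i l x r)
  show ?case
  proof (cases "u = x")
    case True thus ?thesis using 3 by auto
  next
    case False
    show ?thesis
    proof (cases "u \<in> set_tree l")
      case True thus ?thesis using False by simp
    next
      case ul: False
      hence "u \<in> set_tree r" using False 3(3) by simp
      thus ?thesis using 3 False ul by simp
    qed
  qed
qed

lemma I1: "i \<le> rl t \<Longrightarrow> u \<in> set_tree t \<Longrightarrow> n \<notin> set_tree t \<Longrightarrow> Lsub (ins n i t) u = Lsub t u"
  using sub_ins[of i t u n] by (auto simp: Lsub_def)

lemma I1c: "i \<le> rl t \<Longrightarrow> u \<in> set_tree t \<Longrightarrow> n \<notin> set_tree t \<Longrightarrow> cL (ins n i t) u = cL t u"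
  using I1 by (simp add: cL_def)

lemma I2a: "i \<le> rl t \<Longrightarrow> u \<in> set_tree t \<Longrightarrow> n \<notin> set_tree t \<Longrightarrow>
   set_tree (Rsub t u) \<subseteq> set_tree (Rsub (ins n i t) u)"
  using sub_ins[of i t u n] by (auto simp: Rsub_def)

lemma I2b: "i \<le> rl t \<Longrightarrow> u \<in> set_tree t \<Longrightarrow> n \<notin> set_tree t \<Longrightarrow>
   set_tree (Rsub (ins n i t) u) \<subseteq> insert n (set_tree (Rsub t u))"
  using sub_ins[of i t u n] by (auto simp: Rsub_def)

lemma I5: "i \<le> rl t \<Longrightarrow> u \<in> set_tree t \<Longrightarrow> n \<notin> set_tree t \<Longrightarrow>
   cR (ins n i t) u = Some v \<Longrightarrow> v \<noteq> n \<Longrightarrow> cR t u = Some v"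
  using sub_ins[of i t u n] by (auto simp: cR_def Rsub_def root_ins split: if_splits)

lemma dist_ins: "i \<le> rl t \<Longrightarrow> dist t \<Longrightarrow> n \<notin> set_tree t \<Longrightarrow> dist (ins n i t)"
  by (simp add: inorder_ins)

lemma I3:
  assumes "i \<le> rl t" "u \<in> set_tree t" "n \<notin> set_tree t" "dist t" "cR t u = Some v"
  shows "cR (ins n i t) u = Some v \<or> (cR (ins n i t) u = Some n \<and> cL (ins n i t) n = Some v)"
proof -
  let ?T = "ins n i t"
  have dT: "dist ?T" using dist_ins assms by blast
  from sub_ins[OF assms(1-3)] show ?thesis
  proof
    assume "subtree_at ?T u = subtree_at t u"
    thus ?thesis using assms(5) by (simp add: cR_def Rsub_def)
  next
    assume "\<exists>j l r. subtree_at t u = Node l u r \<and> subtree_at ?T u = Node l u (ins n j r) \<and> j \<le> rl r"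
    then obtain j l r where s: "subtree_at t u = Node l u r" "subtree_at ?T u = Node l u (ins n j r)" "j \<le> rl r"
      by blast
    have cRt: "root_of r = Some v" using assms(5) s(1) by (simp add: cR_def Rsub_def)
    show ?thesis
    proof (cases j)
      case (Suc j')
      then obtain a b c where "r = Node a b c" using s(3) by (cases r) auto
      thus ?thesis using s Suc cRt by (simp add: cR_def Rsub_def)
    next
      case 0
      have cRn: "cR ?T u = Some n" using s 0 by (simp add: cR_def Rsub_def)
      have lt: "set_tree l \<subseteq> set_tree t" using s(1) set_subtree_at[of t u] by auto
      have nu: "n \<noteq> u" using assms(2,3) by auto
      have "n \<in> set_tree (subtree_at ?T u)" using s(2) 0 by simp
      hence "subtree_at ?T n = subtree_at (subtree_at ?T u) n" using subtree_at_trans[OF dT] by blast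
      also have "\<dots> = Node r n Leaf" using s(2) 0 nu lt assms(3) by auto
      finally have "cL ?T n = Some v" using cRt by (simp add: cL_def Lsub_def)
      thus ?thesis using cRn by simp
    qed
  qed
qed

lemma I4: "i \<le> rl t \<Longrightarrow> n \<notin> set_tree t \<Longrightarrow> dist t \<Longrightarrow> cL (ins n i t) n = Some v \<Longrightarrow>
   v \<in> set (rbranch t) \<and> set_tree (Lsub t v) \<subseteq> set_tree (Lsub (ins n i t) n)"
proof (induction n i t rule: ins.induct)
  case (1 n t)
  then obtain a b where "t = Node a v b" by (cases t) (auto simp: cL_def)
  thus ?case by auto
next
  case (2 n i) thus ?case by simp
next
  case (3 n i l x r)
  have nx: "n \<noteq> x" "n \<notin> set_tree l" using 3(3) by auto
  have c: "cL (ins n i r) n = Some v" using 3(5) nx by (simp add: cL_Node)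
  have L: "Lsub (Node l x (ins n i r)) n = Lsub (ins n i r) n" using nx by (simp add: Lsub_Node_r)
  from 3(1)[of] 3 c have ih: "v \<in> set (rbranch r) \<and> set_tree (Lsub r v) \<subseteq> set_tree (Lsub (ins n i r) n)" by simp
  hence "v \<in> set_tree r" using set_rbranch by blast
  hence "v \<noteq> x" "v \<notin> set_tree l" using 3(4) by auto
  hence "Lsub (Node l x r) v = Lsub r v" by (simp add: Lsub_Node_r)
  thus ?case using ih L by simp
qed

lemma I6: "n \<notin> set_tree t \<Longrightarrow> subtree_at (ins n (rl t) t) n = Node Leaf n Leaf"
  by (induction t) auto



lemma last_not_butlast: "x \<in> set xs \<Longrightarrow> x \<notin> set (butlast xs) \<Longrightarrow> x = last xs"
  by (induction xs) (auto split: if_splits)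

lemma friendly_facts:
  assumes F: "friendly (P,e)"
  obtains l x r k where "P = Node l x r" "k = length (inorder P)" "inorder P = [1..<Suc k]"
   "srt P" "dist P" "k = last (rbranch P)" "k \<noteq> x"
   "cL P k \<noteq> None" "\<forall>j \<in> set (butlast (rbranch P)) - {x}. \<not> e j"
   "e k \<longrightarrow> (\<forall>c. cL P k = Some c \<longrightarrow> \<not> e c)"
proof -
  define k where "k = length (inorder P)"
  have D: "inorder P = [1..<Suc k]" "has_parent P k" "cL P k \<noteq> None"
    "\<forall>j \<in> set (butlast (rbranch P)) - set_option (root_of P). \<not> e j"
    "e k \<longrightarrow> (\<forall>c. cL P k = Some c \<longrightarrow> \<not> e c)"
    using F by (auto simp: friendly_def is_pattern_def Tn_def Let_def k_def)
  have "P \<noteq> Leaf" using D(3) by (auto simp: cL_def Lsub_def)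
  then obtain l x r where P: "P = Node l x r" by (cases P) auto
  have srt: "srt P" using D(1) sorted_wrt_upt by metis
  hence dP: "dist P" by (simp add: strict_sorted_iff)
  have k1: "k \<ge> 1" using P k_def by simp
  have "last (inorder P) = k" using D(1) k1 by simp
  hence kl: "k = last (rbranch P)" using last_rbranch_inorder[of P] P by simp
  obtain p where "cL P p = Some k \<or> cR P p = Some k" using D(2) by (auto simp: has_parent_def)
  hence "k \<in> set_tree (Lsub P p) \<or> k \<in> set_tree (Rsub P p)" using cL_in cR_in by blast
  hence kx: "k \<noteq> x" using root_notin_sub[of l x r p] dP P by auto
  show ?thesis
    using that[OF P k_def D(1) srt dP kl kx D(3) _ D(5)] D(4) P by simp
qed

lemma emb_back:
  assumes E: "emb (ins n i t) P e g" and i: "i \<le> rl t" and d: "dist t" and n: "n \<notin> set_tree t"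
    and gn: "n \<notin> g ` set_tree P"
  shows "emb t P e g"
proof -
  let ?T = "ins n i t"
  have im: "g ` set_tree P \<subseteq> set_tree t" using E gn by (auto simp: emb_def)
  show ?thesis unfolding emb_def
  proof (intro conjI allI impI)
    show "inj_on g (set_tree P)" using E by (simp add: emb_def)
    show "g ` set_tree P \<subseteq> set_tree t" by fact
  next
    fix p c assume a: "cL P p = Some c"
    have gp: "g p \<in> set_tree t" "g c \<in> set_tree t" using im cL_in_set[OF a] by auto
    have H: "if e c then cL ?T (g p) = Some (g c) else g c \<in> set_tree (Lsub ?T (g p))"
      using E a by (simp add: emb_def)
    have X1: "cL ?T (g p) = cL t (g p)" by (rule I1c[OF i gp(1) n])
    have X2: "Lsub ?T (g p) = Lsub t (g p)" by (rule I1[OF i gp(1) n])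
    show "if e c then cL t (g p) = Some (g c) else g c \<in> set_tree (Lsub t (g p))"
      using H unfolding X1 X2 .
  next
    fix p c assume a: "cR P p = Some c"
    have gp: "g p \<in> set_tree t" "g c \<in> set_tree t" using im cR_in_set[OF a] by auto
    have H: "if e c then cR ?T (g p) = Some (g c) else g c \<in> set_tree (Rsub ?T (g p))"
      using E a by (simp add: emb_def)
    have "g c \<noteq> n" using gp n by auto
    thus "if e c then cR t (g p) = Some (g c) else g c \<in> set_tree (Rsub t (g p))"
      using H I5[OF i gp(1) n] I2b[OF i gp(1) n] by (auto split: if_splits)
  qed
qed

lemma Z_root:
  assumes F: "friendly (P,e)" and nc: "\<not> contains t (P,e)" and d: "dist t" and n: "n \<notin> set_tree t"
  shows "\<not> contains (ins n 0 t) (P,e)"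
proof
  assume "contains (ins n 0 t) (P,e)"
  then obtain g where E: "emb (ins n 0 t) P e g" by (auto simp: contains_emb)
  obtain l x r k where Pf: "P = Node l x r" "k = length (inorder P)" "inorder P = [1..<Suc k]"
   "srt P" "dist P" "k = last (rbranch P)" "k \<noteq> x"
   "cL P k \<noteq> None" "\<forall>j \<in> set (butlast (rbranch P)) - {x}. \<not> e j"
   "e k \<longrightarrow> (\<forall>c. cL P k = Some c \<longrightarrow> \<not> e c)" by (rule friendly_facts[OF F])
  let ?T = "ins n 0 t"
  have dT: "dist ?T" using d n by simp
  have nT: "\<And>w. n \<notin> set_tree (Lsub ?T w) \<and> n \<notin> set_tree (Rsub ?T w)"
    using root_notin_sub[of t n Leaf] dT by simp
  show False
  proof (cases "n \<in> g ` set_tree P")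
    case False
    have "emb t P e g" using emb_back[OF E _ d n False] by simp
    thus False using nc by (auto simp: contains_emb)
  next
    case True
    then obtain q where q: "q \<in> set_tree P" "g q = n" by blast
    show False
    proof (cases "q = x")
      case False
      hence "q \<in> set_tree (Lsub P x) \<or> q \<in> set_tree (Rsub P x)" using q Pf(1) by auto
      thus False using emb_Lsub[OF Pf(5) dT E, of q x] emb_Rsub[OF Pf(5) dT E, of q x] nT[of "g x"] q(2) by auto
    next
      case True
      have "r \<noteq> Leaf"
      proof
        assume "r = Leaf" then have "rbranch P = [x]" using Pf(1) by simp
        thus False using Pf(6,7) by simp
      qed
      then obtain a c b where "r = Node a c b" by (cases r) auto
      hence "cR P x = Some c" using Pf(1) by (simp add: cR_def)
      hence "g c \<in> set_tree (Rsub ?T (g x))" by (rule emb_R[OF E])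
      thus False using True q(2) by simp
    qed
  qed
qed

lemma Z_bot:
  assumes F: "friendly (P,e)" and nc: "\<not> contains t (P,e)" and d: "dist t" and n: "n \<notin> set_tree t"
  shows "\<not> contains (ins n (rl t) t) (P,e)"
proof
  assume "contains (ins n (rl t) t) (P,e)"
  then obtain g where E: "emb (ins n (rl t) t) P e g" by (auto simp: contains_emb)
  obtain l x r k where Pf: "P = Node l x r" "k = length (inorder P)" "inorder P = [1..<Suc k]"
   "srt P" "dist P" "k = last (rbranch P)" "k \<noteq> x"
   "cL P k \<noteq> None" "\<forall>j \<in> set (butlast (rbranch P)) - {x}. \<not> e j"
   "e k \<longrightarrow> (\<forall>c. cL P k = Some c \<longrightarrow> \<not> e c)" by (rule friendly_facts[OF F])
  let ?T = "ins n (rl t) t"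
  have dT: "dist ?T" using dist_ins d n by blast
  have sT: "subtree_at ?T n = Node Leaf n Leaf" by (rule I6[OF n])
  have LT: "Lsub ?T n = Leaf" "Rsub ?T n = Leaf" using sT by (simp_all add: Lsub_def Rsub_def)
  have nrb: "n \<in> set (rbranch ?T)" by (rule n_rbranch_ins)
  show False
  proof (cases "n \<in> g ` set_tree P")
    case False
    have "emb t P e g" using emb_back[OF E _ d n False] by simp
    thus False using nc by (auto simp: contains_emb)
  next
    case True
    then obtain q where q: "q \<in> set_tree P" "g q = n" by blast
    have cLq: "cL P q = None"
    proof (cases "cL P q")
      case (Some c)
      hence "g c \<in> set_tree (Lsub ?T (g q))" by (rule emb_L[OF E])
      thus ?thesis using LT q(2) by simp
    qed
    have cRq: "cR P q = None"
    proof (cases "cR P q")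
      case (Some c)
      hence "g c \<in> set_tree (Rsub ?T (g q))" by (rule emb_R[OF E])
      thus ?thesis using LT q(2) by simp
    qed
    have "q \<in> set (rbranch P)"
    proof -
      { fix w assume "q \<in> set_tree (Lsub P w)"
        hence "g q \<in> set_tree (Lsub ?T (g w))" by (rule emb_Lsub[OF Pf(5) dT E])
        hence False using RB2[OF dT nrb] q(2) by simp }
      thus ?thesis using RB1[OF Pf(5) q(1)] by blast
    qed
    hence "q = k" using last_rbranch[OF Pf(5) _ cRq] Pf(6) by simp
    thus False using cLq Pf(8) by simp
  qed
qed

lemma Z_del:
  assumes F: "friendly (P,e)" and nc: "\<not> contains (ins n i t) (P,e)" and i: "i \<le> rl t"
    and d: "dist t" and n: "n \<notin> set_tree t"
  shows "\<not> contains t (P,e)"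
proof
  assume "contains t (P,e)"
  then obtain f where E: "emb t P e f" by (auto simp: contains_emb)
  obtain l x r k where Pf: "P = Node l x r" "k = length (inorder P)" "inorder P = [1..<Suc k]"
   "srt P" "dist P" "k = last (rbranch P)" "k \<noteq> x"
   "cL P k \<noteq> None" "\<forall>j \<in> set (butlast (rbranch P)) - {x}. \<not> e j"
   "e k \<longrightarrow> (\<forall>c. cL P k = Some c \<longrightarrow> \<not> e c)" by (rule friendly_facts[OF F])
  let ?T = "ins n i t"
  have dT: "dist ?T" using dist_ins d n i by blast
  have im: "f ` set_tree P \<subseteq> set_tree t" and inj: "inj_on f (set_tree P)" using E by (auto simp: emb_def)
  have nf: "n \<notin> f ` set_tree P" using im n by auto
  have Lcase: "\<And>p c. cL P p = Some c \<Longrightarrow>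
      (if e c then cL ?T (f p) = Some (f c) else f c \<in> set_tree (Lsub ?T (f p)))"
  proof -
    fix p c assume a: "cL P p = Some c"
    have fp: "f p \<in> set_tree t" using im cL_in_set[OF a] by auto
    have "if e c then cL t (f p) = Some (f c) else f c \<in> set_tree (Lsub t (f p))"
      using E a by (simp add: emb_def)
    thus "if e c then cL ?T (f p) = Some (f c) else f c \<in> set_tree (Lsub ?T (f p))"
      by (simp add: I1[OF i fp n] I1c[OF i fp n])
  qed
  have Rcase0: "\<And>p c. cR P p = Some c \<Longrightarrow> \<not> e c \<Longrightarrow> f c \<in> set_tree (Rsub ?T (f p))"
  proof -
    fix p c assume a: "cR P p = Some c" "\<not> e c"
    have fp: "f p \<in> set_tree t" using im cR_in_set[OF a(1)] by auto
    have "f c \<in> set_tree (Rsub t (f p))" using E a by (simp add: emb_def)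
    thus "f c \<in> set_tree (Rsub ?T (f p))" using I2a[OF i fp n] by blast
  qed
  show False
  proof (cases "\<forall>p c. cR P p = Some c \<and> e c \<longrightarrow> cR ?T (f p) = Some (f c)")
    case True
    have "emb ?T P e f" unfolding emb_def
    proof (intro conjI allI impI)
      show "inj_on f (set_tree P)" by fact
      show "f ` set_tree P \<subseteq> set_tree ?T" using im by auto
    next
      fix p c assume "cL P p = Some c"
      thus "if e c then cL ?T (f p) = Some (f c) else f c \<in> set_tree (Lsub ?T (f p))" by (rule Lcase)
    next
      fix p c assume "cR P p = Some c"
      thus "if e c then cR ?T (f p) = Some (f c) else f c \<in> set_tree (Rsub ?T (f p))"
        using True Rcase0[of p c] by simp
    qed
    thus False using nc by (auto simp: contains_emb)
  next
    case False
    then obtain a c where ac: "cR P a = Some c" "e c" "cR ?T (f a) \<noteq> Some (f c)" by blast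
    have ain: "a \<in> set_tree P" "c \<in> set_tree P" using cR_in_set[OF ac(1)] by auto
    have fa: "f a \<in> set_tree t" using im ain by auto
    have "cR t (f a) = Some (f c)" using E ac by (simp add: emb_def)
    from I3[OF i fa n d this] ac(3) have sp: "cR ?T (f a) = Some n" "cL ?T n = Some (f c)" by auto
    have fc_rb: "f c \<in> set (rbranch t)" and Lk: "set_tree (Lsub t (f c)) \<subseteq> set_tree (Lsub ?T n)"
      using I4[OF i n d sp(2)] by auto
    have c_rb: "c \<in> set (rbranch P)"
    proof -
      { fix w assume "c \<in> set_tree (Lsub P w)"
        hence "f c \<in> set_tree (Lsub t (f w))" by (rule emb_Lsub[OF Pf(5) d E])
        hence False using RB2[OF d fc_rb] by simp }
      thus ?thesis using RB1[OF Pf(5) ain(2)] by blast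
    qed
    have cRa: "c \<in> set_tree (Rsub P a)" by (rule cR_in[OF ac(1)])
    have "x \<notin> set_tree (Rsub P a)" using root_notin_sub[of l x r a] Pf(5) unfolding Pf(1) by blast
    hence c_ne: "c \<noteq> x" using cRa by blast
    have "c \<notin> set (butlast (rbranch P))" using Pf(9) c_ne ac(2) by blast
    hence "c = last (rbranch P)" using last_not_butlast[OF c_rb] by blast
    hence ck: "c = k" using Pf(6) by simp
    obtain c' where c': "cL P k = Some c'" using Pf(8) by auto
    have ec': "\<not> e c'" using Pf(10) ac(2) ck c' by simp
    have Pk: "\<And>p. p \<in> set_tree P \<Longrightarrow> p \<le> k"
    proof -
      fix p assume "p \<in> set_tree P"
      hence "p \<in> set (inorder P)" by simp
      hence "p \<in> set [1..<Suc k]" unfolding Pf(3) .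
      hence "p < Suc k" by (simp only: set_upt atLeastLessThan_iff)
      thus "p \<le> k" by simp
    qed
    have noLk: "\<And>p. cL P p \<noteq> Some k"
    proof
      fix p assume a: "cL P p = Some k"
      hence "k < p" using Lsub_less[OF Pf(4) cL_in[OF a]] by simp
      moreover have "p \<le> k" using Pk cL_in_set[OF a] by blast
      ultimately show False by simp
    qed
    have noRk: "\<And>j. cR P k \<noteq> Some j"
    proof
      fix j assume a: "cR P k = Some j"
      hence "k < j" using Rsub_greater[OF Pf(4) cR_in[OF a]] by simp
      moreover have "j \<le> k" using Pk cR_in_set[OF a] by blast
      ultimately show False by simp
    qed
    have c'k: "c' \<noteq> k" using noLk c' by metis
    have ak: "a \<noteq> k" using noRk ac(1) by metis
    define g where "g = f(k := n)"
    have "emb ?T P e g" unfolding emb_def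
    proof (intro conjI allI impI)
      show "inj_on g (set_tree P)" unfolding g_def by (rule inj_on_fun_updI[OF inj nf])
      show "g ` set_tree P \<subseteq> set_tree ?T" using im by (auto simp: g_def)
    next
      fix p j assume a: "cL P p = Some j"
      have jk: "j \<noteq> k" using noLk a by metis
      show "if e j then cL ?T (g p) = Some (g j) else g j \<in> set_tree (Lsub ?T (g p))"
      proof (cases "p = k")
        case True
        hence "j = c'" using a c' by simp
        have "f c' \<in> set_tree (Lsub t (f k))" by (rule emb_L[OF E c'])
        hence "f c' \<in> set_tree (Lsub ?T n)" using Lk ck by blast
        thus ?thesis using True `j = c'` ec' c'k by (simp add: g_def)
      next
        case False
        thus ?thesis using Lcase[OF a] jk by (simp add: g_def)
      qed
    next
      fix p j assume a: "cR P p = Some j"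
      have pk: "p \<noteq> k" using noRk a by metis
      show "if e j then cR ?T (g p) = Some (g j) else g j \<in> set_tree (Rsub ?T (g p))"
      proof (cases "j = k")
        case True
        hence "p = a" using cR_unique[OF Pf(5) a] ac(1) ck by simp
        thus ?thesis using True sp(1) ak ac(2) ck by (simp add: g_def)
      next
        case False
        show ?thesis
        proof (cases "e j")
          case True
          have fp: "f p \<in> set_tree t" using im cR_in_set[OF a] by auto
          have "cR t (f p) = Some (f j)" using E a True by (simp add: emb_def)
          from I3[OF i fp n d this] have "cR ?T (f p) = Some (f j)"
          proof
            assume "cR ?T (f p) = Some n \<and> cL ?T n = Some (f j)"
            hence "f j = f c" using sp(2) by simp
            hence "j = c" using inj_onD[OF inj _ _ ain(2)] cR_in_set[OF a] by blast
            thus ?thesis using False ck by simp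
          qed
          thus ?thesis using True False pk by (simp add: g_def)
        next
          case ne: False
          thus ?thesis using Rcase0[OF a ne] False pk by (simp add: g_def)
        qed
      qed
    qed
    thus False using nc by (auto simp: contains_emb)
  qed
qed



lemma rot_up_inorder: "rot_up j t = Some t' \<Longrightarrow> inorder t' = inorder t"
proof (induction t arbitrary: t')
  case Leaf thus ?case by simp
next
  case (Node l x r)
  show ?case
  proof (cases "x = j")
    case True thus ?thesis using Node.prems by simp
  next
    case xj: False
    show ?thesis
    proof (cases "j \<in> set_tree l")
      case True
      then obtain l' where "rot_up j l = Some l'" "t' = Node l' x r" using Node.prems xj by auto
      thus ?thesis using Node.IH(1) by simp
    next
      case jl: False
      show ?thesis
      proof (cases r)
        case Leaf thus ?thesis using Node.prems xj jl by simp
      next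
        case (Node y c z)
        show ?thesis
        proof (cases "c = j")
          case True thus ?thesis using Node.prems xj jl Node by auto
        next
          case False
          then obtain r' where "rot_up j r = Some r'" "t' = Node l x r'"
            using Node.prems xj jl Node by auto
          thus ?thesis using Node.IH(2) by simp
        qed
      qed
    qed
  qed
qed

lemma rot_down_inorder: "rot_down j t = Some t' \<Longrightarrow> inorder t' = inorder t"
proof (induction t arbitrary: t')
  case Leaf thus ?case by simp
next
  case (Node l x r)
  show ?case
  proof (cases "x = j")
    case True
    then obtain a i y where "l = Node a i y" "t' = Node a i (Node y j r)" using Node.prems
      by (cases l) auto
    thus ?thesis using True by simp
  next
    case xj: False
    show ?thesis
    proof (cases "j \<in> set_tree l")
      case True
      then obtain l' where "rot_down j l = Some l'" "t' = Node l' x r" using Node.prems xj by auto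
      thus ?thesis using Node.IH(1) by simp
    next
      case jl: False
      then obtain r' where "rot_down j r = Some r'" "t' = Node l x r'" using Node.prems xj by auto
      thus ?thesis using Node.IH(2) by simp
    qed
  qed
qed

lemma rot_up_notin: "j \<notin> set_tree t \<Longrightarrow> rot_up j t = None"
proof (induction t)
  case (Node l x r)
  thus ?case by (cases r) auto
qed simp

lemma rot_down_notin: "j \<notin> set_tree t \<Longrightarrow> rot_down j t = None"
  by (induction t) auto

lemma rot_inorder: "rot b j t = Some t' \<Longrightarrow> inorder t' = inorder t"
  by (cases b) (auto simp: rot_def dest: rot_up_inorder rot_down_inorder)

lemma rot_notin: "j \<notin> set_tree t \<Longrightarrow> rot b j t = None"
  by (cases b) (auto simp: rot_def rot_up_notin rot_down_notin)

lemma slide_inorder: "slide b j d t = Some t' \<Longrightarrow> inorder t' = inorder t"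
proof (induction d arbitrary: t)
  case (Suc d)
  then show ?case by (cases "rot b j t") (auto dest: rot_inorder)
qed simp

lemma slide_notin: "j \<notin> set_tree t \<Longrightarrow> 1 \<le> d \<Longrightarrow> slide b j d t = None"
  by (cases d) (auto simp: rot_notin)

lemma slide_commute:
  assumes "\<And>s. rot b j (E s) = map_option E (rot b j s)"
  shows "slide b j d (E t) = map_option E (slide b j d t)"
proof (induction d arbitrary: t)
  case (Suc d)
  then show ?case using assms[of t] by (cases "rot b j t") auto
qed simp

lemma rot_ins0: "j \<noteq> n \<Longrightarrow> rot b j (ins n 0 s) = map_option (ins n 0) (rot b j s)"
proof (cases "j \<in> set_tree s")
  case True
  assume "j \<noteq> n"
  thus ?thesis using True
    by (cases b; cases "rot_up j s"; cases "rot_down j s") (auto simp: rot_def)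
next
  case False
  assume "j \<noteq> n"
  thus ?thesis using False by (cases b) (auto simp: rot_def rot_up_notin rot_down_notin)
qed

fun bot :: "nat \<Rightarrow> nat tree \<Rightarrow> nat tree" where
  "bot n Leaf = Node Leaf n Leaf"
| "bot n (Node l x r) = Node l x (bot n r)"

lemma bot_ins: "bot n t = ins n (rl t) t"
  by (induction t) auto

lemma rot_up_bot: "j \<noteq> n \<Longrightarrow> rot_up j (bot n t) = map_option (bot n) (rot_up j t)"
proof (induction t)
  case Leaf thus ?case by simp
next
  case (Node l x r)
  show ?case
  proof (cases r)
    case Leaf thus ?thesis using Node.prems by (cases "rot_up j l") auto
  next
    case (Node y c z)
    thus ?thesis using Node.prems Node.IH(2)
      by (cases "rot_up j l"; cases "rot_up j r") auto
  qed
qed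

lemma rot_down_bot: "j \<noteq> n \<Longrightarrow> rot_down j (bot n t) = map_option (bot n) (rot_down j t)"
proof (induction t)
  case Leaf thus ?case by simp
next
  case (Node l x r)
  thus ?case by (cases "rot_down j l"; cases "rot_down j r"; cases l) auto
qed

lemma rot_bot: "j \<noteq> n \<Longrightarrow> rot b j (bot n s) = map_option (bot n) (rot b j s)"
  by (cases b) (simp_all add: rot_def rot_up_bot rot_down_bot)

lemma rotup_n: "n \<notin> set_tree t \<Longrightarrow> i < rl t \<Longrightarrow> rot_up n (ins n (Suc i) t) = Some (ins n i t)"
proof (induction i arbitrary: t)
  case 0
  then obtain l x r where "t = Node l x r" by (cases t) auto
  thus ?case using 0 by auto
next
  case (Suc i)
  then obtain l x r where t: "t = Node l x r" by (cases t) auto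
  with Suc.prems obtain a b c where r: "r = Node a b c" by (cases r) auto
  have "rot_up n (ins n (Suc i) r) = Some (ins n i r)" using Suc.IH[of r] Suc.prems t by auto
  thus ?case using Suc.prems t r by auto
qed

lemma rotdown_n: "n \<notin> set_tree t \<Longrightarrow> i < rl t \<Longrightarrow> rot_down n (ins n i t) = Some (ins n (Suc i) t)"
proof (induction i arbitrary: t)
  case 0
  then obtain l x r where "t = Node l x r" by (cases t) auto
  thus ?case using 0 by auto
next
  case (Suc i)
  then obtain l x r where t: "t = Node l x r" by (cases t) auto
  have "rot_down n (ins n i r) = Some (ins n (Suc i) r)" using Suc.IH[of r] Suc.prems t by auto
  thus ?case using Suc.prems t by auto
qed

lemma rotdown_n_max: "n \<notin> set_tree t \<Longrightarrow> rot_down n (ins n (rl t) t) = None"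
  by (induction t) auto

lemma slide_up_n: "n \<notin> set_tree t \<Longrightarrow> i \<le> rl t \<Longrightarrow>
   slide True n d (ins n i t) = (if d \<le> i then Some (ins n (i - d) t) else None)"
proof (induction d arbitrary: i)
  case (Suc d)
  show ?case
  proof (cases i)
    case 0 thus ?thesis by (simp add: rot_def)
  next
    case (Suc i')
    hence "rot True n (ins n i t) = Some (ins n i' t)" using rotup_n Suc.prems by (simp add: rot_def)
    thus ?thesis using Suc.IH[of i'] Suc.prems Suc by simp
  qed
qed simp

lemma slide_down_n: "n \<notin> set_tree t \<Longrightarrow> i \<le> rl t \<Longrightarrow>
   slide False n d (ins n i t) = (if i + d \<le> rl t then Some (ins n (i + d) t) else None)"
proof (induction d arbitrary: i)
  case (Suc d)
  show ?case
  proof (cases "i = rl t")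
    case True thus ?thesis using rotdown_n_max Suc.prems by (simp add: rot_def)
  next
    case False
    hence "rot False n (ins n i t) = Some (ins n (Suc i) t)" using rotdown_n Suc.prems by (simp add: rot_def)
    thus ?thesis using Suc.IH[of "Suc i"] Suc.prems False by simp
  qed
qed simp



lemma Tn_ins: "t \<in> Tn n' \<Longrightarrow> i \<le> rl t \<Longrightarrow> ins (Suc n') i t \<in> Tn (Suc n')"
  by (simp add: Tn_def inorder_ins)

lemma Tn_set: "t \<in> Tn n' \<Longrightarrow> set_tree t = {1..n'}"
proof -
  assume "t \<in> Tn n'"
  hence "set (inorder t) = set [1..<Suc n']" by (simp add: Tn_def)
  thus ?thesis by (simp only: set_inorder set_upt) auto
qed

lemma Tn_notin: "t \<in> Tn n' \<Longrightarrow> Suc n' \<notin> set_tree t"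
  using Tn_set by auto

lemma Tn_dist: "t \<in> Tn n' \<Longrightarrow> dist t"
  by (simp add: Tn_def)

lemma Tn_decomp:
  assumes "T \<in> Tn (Suc n')"
  shows "\<exists>t i. t \<in> Tn n' \<and> i \<le> rl t \<and> T = ins (Suc n') i t"
proof -
  have io: "inorder T = [1..<Suc n'] @ [Suc n']" using assms by (simp add: Tn_def)
  hence "T \<noteq> Leaf" by auto
  from ins_decomp[OF this] have d: "T = ins (last (inorder T)) (rl T - 1) (del T)" "rl T - 1 \<le> rl (del T)" by auto
  have lt: "last (inorder T) = Suc n'" using io by simp
  have "inorder T = inorder (del T) @ [Suc n']" using inorder_ins[OF d(2)] d(1) lt by metis
  hence "inorder (del T) = [1..<Suc n']" using io by simp
  hence "del T \<in> Tn n'" by (simp add: Tn_def)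
  thus ?thesis using d lt by metis
qed

lemma avoiding_Tn: "T \<in> avoiding n pats \<Longrightarrow> T \<in> Tn n"
  by (simp add: avoiding_def)

lemma L_del:
  assumes F: "\<forall>pe\<in>set pats. friendly pe" and t: "t \<in> Tn n'" and i: "i \<le> rl t"
    and T: "ins (Suc n') i t \<in> avoiding (Suc n') pats"
  shows "t \<in> avoiding n' pats"
proof -
  { fix P e assume pe: "(P,e) \<in> set pats"
    have "\<not> contains (ins (Suc n') i t) (P,e)" using T pe by (auto simp: avoiding_def)
    hence "\<not> contains t (P,e)" using Z_del[OF _ _ i Tn_dist[OF t] Tn_notin[OF t]] F pe by blast }
  thus ?thesis using t by (auto simp: avoiding_def)
qed

lemma L_ins0:
  assumes F: "\<forall>pe\<in>set pats. friendly pe" and t: "t \<in> avoiding n' pats"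
  shows "ins (Suc n') 0 t \<in> avoiding (Suc n') pats"
proof -
  have tT: "t \<in> Tn n'" using t by (simp add: avoiding_def)
  { fix P e assume pe: "(P,e) \<in> set pats"
    have "\<not> contains t (P,e)" using t pe by (auto simp: avoiding_def)
    hence "\<not> contains (ins (Suc n') 0 t) (P,e)" using Z_root[OF _ _ Tn_dist[OF tT] Tn_notin[OF tT]] F pe by blast }
  thus ?thesis using Tn_ins[OF tT, of 0] by (auto simp: avoiding_def)
qed

lemma L_bot:
  assumes F: "\<forall>pe\<in>set pats. friendly pe" and t: "t \<in> avoiding n' pats"
  shows "ins (Suc n') (rl t) t \<in> avoiding (Suc n') pats"
proof -
  have tT: "t \<in> Tn n'" using t by (simp add: avoiding_def)
  { fix P e assume pe: "(P,e) \<in> set pats"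
    have "\<not> contains t (P,e)" using t pe by (auto simp: avoiding_def)
    hence "\<not> contains (ins (Suc n') (rl t) t) (P,e)" using Z_bot[OF _ _ Tn_dist[OF tT] Tn_notin[OF tT]] F pe by blast }
  thus ?thesis using Tn_ins[OF tT, of "rl t"] by (auto simp: avoiding_def)
qed

definition Rel :: "bool \<Rightarrow> nat \<Rightarrow> nat \<Rightarrow> bool" where
  "Rel b x y \<longleftrightarrow> (if b then y < x else x < y)"

lemma Rel_asym: "Rel b x y \<Longrightarrow> \<not> Rel b y x"
  by (auto simp: Rel_def split: if_splits)

lemma Rel_flip: "Rel (\<not> b) x y \<longleftrightarrow> Rel b y x"
  by (auto simp: Rel_def)

lemma sorted_take_mem:
  assumes s: "sorted_wrt R xs" and asym: "\<And>x y. R x y \<Longrightarrow> \<not> R y x"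
    and j: "j < length xs" and x: "x \<in> set xs" and r: "R x (xs ! j)"
  shows "x \<in> set (take j xs)"
proof -
  obtain i where i: "i < length xs" "xs ! i = x" using x by (metis in_set_conv_nth)
  consider "i < j" | "i = j" | "j < i" by linarith
  then show ?thesis
  proof cases
    case 1 thus ?thesis using i j by (metis in_set_conv_nth length_take min_less_iff_conj nth_take)
  next
    case 2 thus ?thesis using i r asym by blast
  next
    case 3
    hence "R (xs ! j) (xs ! i)" using sorted_wrt_nth_less[OF s 3 i(1)] by simp
    thus ?thesis using i r asym by blast
  qed
qed

lemma sorted_gap:
  assumes s: "sorted_wrt R xs" and asym: "\<And>x y. R x y \<Longrightarrow> \<not> R y x"
    and j: "Suc j < length xs" and x: "x \<in> set xs" and r1: "R (xs ! j) x" and r2: "R x (xs ! Suc j)"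
  shows False
proof -
  obtain i where i: "i < length xs" "xs ! i = x" using x by (metis in_set_conv_nth)
  have "\<not> i \<le> j"
  proof
    assume "i \<le> j"
    then consider "i = j" | "i < j" by linarith
    thus False
    proof cases
      case 1 thus False using r1 i asym by blast
    next
      case 2 thus False using sorted_wrt_nth_less[OF s 2] j i r1 asym by simp
    qed
  qed
  moreover have "\<not> Suc j \<le> i"
  proof
    assume "Suc j \<le> i"
    then consider "i = Suc j" | "Suc j < i" by linarith
    thus False
    proof cases
      case 1 thus False using r2 i asym by blast
    next
      case 2 thus False using sorted_wrt_nth_less[OF s 2] j i r2 asym by simp
    qed
  qed
  ultimately show False by simp
qed

lemma MS1:
  assumes n: "n \<notin> set_tree t" and p: "p \<le> rl t" and m: "minimal_slide L b n (ins n p t) T'"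
  shows "\<exists>p'. T' = ins n p' t \<and> p' \<le> rl t \<and> T' \<in> L \<and> Rel b p p'"
proof -
  obtain d where d: "d \<ge> 1" "slide b n d (ins n p t) = Some T'" "T' \<in> L"
    using m by (auto simp: minimal_slide_def)
  show ?thesis
  proof (cases b)
    case True
    with d slide_up_n[OF n p, of d] have "d \<le> p" "T' = ins n (p - d) t" by (auto split: if_splits)
    thus ?thesis using d True p by (auto simp: Rel_def)
  next
    case False
    with d slide_down_n[OF n p, of d] have "p + d \<le> rl t" "T' = ins n (p + d) t" by (auto split: if_splits)
    thus ?thesis using d False p by (auto simp: Rel_def)
  qed
qed

lemma MS2:
  assumes n: "n \<notin> set_tree t" and p: "p \<le> rl t" and p': "p' \<le> rl t" and inL: "ins n p' t \<in> L"
    and r: "Rel b p p'" and gap: "\<And>q. q \<le> rl t \<Longrightarrow> Rel b p q \<Longrightarrow> Rel b q p' \<Longrightarrow> ins n q t \<notin> L"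
  shows "minimal_slide L b n (ins n p t) (ins n p' t)"
proof (cases b)
  case True
  hence pp: "p' < p" using r by (simp add: Rel_def)
  show ?thesis unfolding minimal_slide_def
  proof (intro exI[of _ "p - p'"] conjI allI impI)
    show "1 \<le> p - p'" using pp by simp
    show "slide b n (p - p') (ins n p t) = Some (ins n p' t)" using slide_up_n[OF n p] True pp by simp
    show "ins n p' t \<in> L" by fact
  next
    fix d' t'' assume a: "1 \<le> d' \<and> d' < p - p'" "slide b n d' (ins n p t) = Some t''"
    hence "t'' = ins n (p - d') t" using slide_up_n[OF n p] True by (simp split: if_splits)
    moreover have "p' < p - d'" "p - d' < p" using a(1) by linarith+
    moreover have "ins n (p - d') t \<notin> L" using gap[of "p - d'"] calculation(2,3) p True by (simp add: Rel_def)
    ultimately show "t'' \<notin> L" by simp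
  qed
next
  case False
  hence pp: "p < p'" using r by (simp add: Rel_def)
  show ?thesis unfolding minimal_slide_def
  proof (intro exI[of _ "p' - p"] conjI allI impI)
    show "1 \<le> p' - p" using pp by simp
    show "slide b n (p' - p) (ins n p t) = Some (ins n p' t)" using slide_down_n[OF n p] False pp p' by simp
    show "ins n p' t \<in> L" by fact
  next
    fix d' t'' assume a: "1 \<le> d' \<and> d' < p' - p" "slide b n d' (ins n p t) = Some t''"
    hence "t'' = ins n (p + d') t" using slide_down_n[OF n p] False by (simp split: if_splits)
    moreover have "p + d' < p'" "p + d' \<le> rl t" using a(1) p' by linarith+
    moreover have "ins n (p + d') t \<notin> L" using gap[of "p + d'"] calculation(2,3) False a(1) by (simp add: Rel_def)
    ultimately show "t'' \<notin> L" by simp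
  qed
qed

lemma S_good_in:
  assumes "S_good L V j" shows "j \<in> set_tree (last V)"
proof (rule ccontr)
  assume a: "j \<notin> set_tree (last V)"
  from assms obtain up T' where "minimal_slide L up j (last V) T'" by (auto simp: S_good_def S_cand_def)
  then obtain d where "d \<ge> 1" "slide up j d (last V) = Some T'" by (auto simp: minimal_slide_def)
  thus False using slide_notin[OF a] by simp
qed

lemma S_stop_full: "set V = L \<Longrightarrow> S_stop L V"
  by (auto simp: S_stop_def S_good_def S_cand_def minimal_slide_def)



definition pos :: "nat tree set \<Rightarrow> nat \<Rightarrow> bool \<Rightarrow> nat tree \<Rightarrow> nat list" where
 "pos L n b t = filter (\<lambda>i. ins n i t \<in> L) (if b then rev [0..<Suc (rl t)] else [0..<Suc (rl t)])"

definition sw :: "nat tree set \<Rightarrow> nat \<Rightarrow> bool \<Rightarrow> nat tree \<Rightarrow> nat tree list" where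
 "sw L n b t = map (\<lambda>i. ins n i t) (pos L n b t)"

fun zz :: "nat tree set \<Rightarrow> nat \<Rightarrow> bool \<Rightarrow> nat tree list \<Rightarrow> nat tree list" where
  "zz L n b [] = []"
| "zz L n b (t # ts) = sw L n b t @ zz L n (\<not> b) ts"

lemma set_pos: "set (pos L n b t) = {i. i \<le> rl t \<and> ins n i t \<in> L}"
  by (auto simp: pos_def)

lemma distinct_pos: "distinct (pos L n b t)" by (simp add: pos_def)

lemma sorted_pos: "sorted_wrt (Rel b) (pos L n b t)"
proof -
  have "sorted_wrt (Rel b) (if b then rev [0..<Suc (rl t)] else [0..<Suc (rl t)])"
  proof (cases b)
    case True thus ?thesis by (simp add: sorted_wrt_rev Rel_def)
  next
    case False
    have "Rel False = (<)" by (rule ext)+ (simp add: Rel_def)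
    thus ?thesis using False sorted_wrt_upt[of 0 "Suc (rl t)"] by simp
  qed
  thus ?thesis unfolding pos_def by (rule sorted_wrt_filter)
qed

lemma set_sw: "set (sw L n b t) = {ins n i t | i. i \<le> rl t \<and> ins n i t \<in> L}"
  by (auto simp: sw_def set_pos)

lemma length_sw: "length (sw L n b t) = length (pos L n b t)"
  by (simp add: sw_def)

lemma sw_nth: "j < length (pos L n b t) \<Longrightarrow> sw L n b t ! j = ins n (pos L n b t ! j) t"
  by (simp add: sw_def)

lemma distinct_sw: "distinct (sw L n b t)"
  unfolding sw_def distinct_map
proof
  show "distinct (pos L n b t)" by (rule distinct_pos)
  show "inj_on (\<lambda>i. ins n i t) (set (pos L n b t))"
    by (rule inj_onI) (auto simp: set_pos dest: ins_inj)
qed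

lemma set_zz: "set (zz L n b ts) = {ins n i t | t i. t \<in> set ts \<and> i \<le> rl t \<and> ins n i t \<in> L}"
  by (induction ts arbitrary: b) (auto simp: set_sw)

lemma zz_append: "zz L n b (as @ bs) = zz L n b as @ zz L n (if even (length as) then b else \<not> b) bs"
  by (induction as arbitrary: b) auto

lemma distinct_zz: "distinct ts \<Longrightarrow> distinct (zz L n b ts)"
proof (induction ts arbitrary: b)
  case Nil thus ?case by simp
next
  case (Cons t ts)
  have "set (sw L n b t) \<inter> set (zz L n (\<not> b) ts) = {}"
  proof (rule ccontr)
    assume "set (sw L n b t) \<inter> set (zz L n (\<not> b) ts) \<noteq> {}"
    then obtain i i' t' where "i \<le> rl t" "t' \<in> set ts" "i' \<le> rl t'" "ins n i t = ins n i' t'"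
      by (auto simp: set_sw set_zz)
    thus False using ins_inj Cons.prems by fastforce
  qed
  thus ?case using Cons distinct_sw by simp
qed

lemma pos_ends:
  assumes "ins n 0 t \<in> L" "ins n (rl t) t \<in> L"
  shows "pos L n True t \<noteq> []" "hd (pos L n True t) = rl t" "last (pos L n True t) = 0"
        "pos L n False t \<noteq> []" "hd (pos L n False t) = 0" "last (pos L n False t) = rl t"
proof -
  have A: "rev [0..<Suc (rl t)] = rl t # rev [0..<rl t]" by simp
  have B: "[0..<Suc (rl t)] = 0 # [Suc 0..<Suc (rl t)]" by (rule upt_conv_Cons) simp
  have C: "[0..<Suc (rl t)] = [0..<rl t] @ [rl t]" by simp
  have B': "rev [0..<Suc (rl t)] = rev [Suc 0..<Suc (rl t)] @ [0]" using B by simp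
  show "pos L n True t \<noteq> []" "hd (pos L n True t) = rl t"
    unfolding pos_def using assms by (simp_all only: if_True A filter.simps if_True list.sel) simp_all
  show "last (pos L n True t) = 0"
    unfolding pos_def using assms by (simp only: if_True B' filter_append) simp
  show "pos L n False t \<noteq> []" "hd (pos L n False t) = 0"
    unfolding pos_def using assms by (simp_all only: if_False B filter.simps if_True list.sel) simp_all
  show "last (pos L n False t) = rl t"
    unfolding pos_def using assms by (simp only: if_False C filter_append) simp
qed

lemma distinct_nth_take: "distinct xs \<Longrightarrow> j < length xs \<Longrightarrow> xs ! j \<notin> set (take j xs)"
proof
  assume d: "distinct xs" and j: "j < length xs" and m: "xs ! j \<in> set (take j xs)"
  have "xs ! j \<in> set (drop j xs)" using Cons_nth_drop_Suc[OF j] by (metis list.set_intros(1))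
  thus False using set_take_disj_set_drop_if_distinct[OF d, of j j] m by auto
qed

lemma WS:
  assumes tT: "t \<in> Tn n'" and n: "n = Suc n'"
    and V0: "\<forall>T\<in>set V0. \<forall>i \<le> rl t. T \<noteq> ins n i t"
    and j: "0 < j" "j < length (sw L n b t)"
  shows "S_step L (V0 @ take j (sw L n b t)) (sw L n b t ! j)"
proof -
  let ?qs = "pos L n b t" let ?W = "sw L n b t" let ?V = "V0 @ take j ?W"
  have nt: "n \<notin> set_tree t" using Tn_notin tT n by simp
  have jq: "j < length ?qs" using j(2) length_sw by metis
  define p where "p = ?qs ! (j - 1)"
  define p' where "p' = ?qs ! j"
  have pin: "p \<in> set ?qs" "p' \<in> set ?qs" using jq p_def p'_def by auto
  hence pp: "p \<le> rl t" "ins n p t \<in> L" "p' \<le> rl t" "ins n p' t \<in> L" by (auto simp: set_pos)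
  have srt: "sorted_wrt (Rel b) ?qs" by (rule sorted_pos)
  have jj: "Suc (j - 1) = j" using j(1) by simp
  have r: "Rel b p p'" using sorted_wrt_nth_less[OF srt, of "j-1" j] jq j(1) p_def p'_def by simp
  have tk: "take j ?W = take (j - 1) ?W @ [?W ! (j - 1)]"
    using take_Suc_conv_app_nth[of "j - 1" ?W] jj j(2) by simp
  have lastV: "last ?V = ins n p t" using tk sw_nth[of "j - 1"] jq p_def by simp
  have Wj: "?W ! j = ins n p' t" by (simp add: sw_nth jq p'_def)
  have ms: "minimal_slide L b n (last ?V) (?W ! j)"
    unfolding lastV Wj
  proof (rule MS2[OF nt pp(1) pp(3) pp(4) r])
    fix q assume q: "q \<le> rl t" "Rel b p q" "Rel b q p'"
    show "ins n q t \<notin> L"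
    proof
      assume "ins n q t \<in> L"
      hence "q \<in> set ?qs" using q by (simp add: set_pos)
      thus False using sorted_gap[OF srt Rel_asym, of "j - 1" q] jj jq q p_def p'_def by simp
    qed
  qed
  have tkm: "take j ?W = map (\<lambda>i. ins n i t) (take j ?qs)" by (simp add: sw_def take_map)
  have notV: "?W ! j \<notin> set ?V"
  proof
    assume "?W ! j \<in> set ?V"
    moreover have "?W ! j \<notin> set V0" using V0 pp(3) Wj by auto
    ultimately have "ins n p' t \<in> set (take j ?W)" using Wj by simp
    then obtain q where q: "q \<in> set (take j ?qs)" "ins n p' t = ins n q t" using tkm by auto
    have "q \<le> rl t" using q(1) set_take_subset[of j ?qs] by (auto simp: set_pos)
    hence "q = p'" using ins_inj[OF pp(3) _ q(2)] by simp
    thus False using q(1) distinct_nth_take[OF distinct_pos jq] p'_def by simp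
  qed
  have cand: "S_cand L ?V n b (?W ! j)" unfolding S_cand_def using ms notV by blast
  have largest: "S_largest L ?V n"
    unfolding S_largest_def
  proof (intro conjI allI impI)
    show "S_good L ?V n" using cand by (auto simp: S_good_def)
  next
    fix j' assume "S_good L ?V j'"
    hence "j' \<in> set_tree (last ?V)" by (rule S_good_in)
    thus "j' \<le> n" using lastV Tn_set[OF tT] n by auto
  qed
  have noopp: "\<not> (\<exists>T''. S_cand L ?V n (\<not> b) T'')"
  proof
    assume "\<exists>T''. S_cand L ?V n (\<not> b) T''"
    then obtain T'' where c: "minimal_slide L (\<not> b) n (ins n p t) T''" "T'' \<notin> set ?V"
      by (auto simp: S_cand_def lastV)
    from MS1[OF nt pp(1) c(1)] obtain p'' where
      p'': "T'' = ins n p'' t" "p'' \<le> rl t" "T'' \<in> L" "Rel (\<not> b) p p''" by blast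
    have "Rel b p'' p" using p''(4) Rel_flip by simp
    moreover have "p'' \<in> set ?qs" using p'' by (simp add: set_pos)
    ultimately have "p'' \<in> set (take (j - 1) ?qs)"
      using sorted_take_mem[OF srt Rel_asym, of "j - 1" p''] jq p_def by simp
    hence "p'' \<in> set (take j ?qs)" using set_take_subset_set_take[of "j - 1" j ?qs] by auto
    hence "T'' \<in> set (take j ?W)" using tkm p''(1) by auto
    thus False using c(2) by simp
  qed
  show ?thesis unfolding S_step_def using largest cand noopp by blast
qed



lemma BS:
  assumes n: "n = Suc n'" and L': "L' = avoiding n' pats"
    and Vs: "Vs \<noteq> []" "set Vs \<subseteq> L'"
    and V: "set V = {ins n i t | t i. t \<in> set Vs \<and> i \<le> rl t \<and> ins n i t \<in> L}" "last V = E (last Vs)"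
    and e1: "\<And>s j b. j \<noteq> n \<Longrightarrow> rot b j (E s) = map_option E (rot b j s)"
    and e2: "\<And>s. s \<in> Tn n' \<Longrightarrow> E s \<in> L \<longleftrightarrow> s \<in> L'"
    and e3: "\<And>s. \<exists>i \<le> rl s. E s = ins n i s"
    and step: "S_step L' Vs t1"
  shows "S_step L V (E t1)"
proof -
  let ?s = "last Vs"
  have sL: "?s \<in> L'" using Vs by auto
  have sT: "?s \<in> Tn n'" using sL L' avoiding_Tn by blast
  have ns: "n \<notin> set_tree ?s" using Tn_notin[OF sT] n by simp
  have L'T: "\<And>t. t \<in> L' \<Longrightarrow> t \<in> Tn n'" using L' avoiding_Tn by blast
  have inV: "E t' \<in> set V \<longleftrightarrow> t' \<in> set Vs" if t': "t' \<in> L'" for t'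
  proof -
    obtain i0 where i0: "i0 \<le> rl t'" "E t' = ins n i0 t'" using e3 by blast
    show ?thesis
    proof
      assume "E t' \<in> set V"
      then obtain t i where "t \<in> set Vs" "i \<le> rl t" "E t' = ins n i t" using V(1) by auto
      thus "t' \<in> set Vs" using ins_inj[OF i0(1)] i0(2) by metis
    next
      assume "t' \<in> set Vs"
      moreover have "E t' \<in> L" using e2 L'T[OF t'] t' by blast
      ultimately show "E t' \<in> set V" using V(1) i0 by auto
    qed
  qed
  have inT: "\<And>up j d t'. slide up j d ?s = Some t' \<Longrightarrow> t' \<in> Tn n'"
    using slide_inorder sT by (simp add: Tn_def)
  have msE: "minimal_slide L up j (E ?s) T' \<longleftrightarrow> (\<exists>t'. T' = E t' \<and> minimal_slide L' up j ?s t')"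
    if jn: "j \<noteq> n" for j up T'
  proof -
    have sc: "\<And>d t. slide up j d (E t) = map_option E (slide up j d t)"
      by (rule slide_commute) (rule e1[OF jn])
    show ?thesis
    proof
      assume "minimal_slide L up j (E ?s) T'"
      then obtain d where d: "d \<ge> 1" "slide up j d (E ?s) = Some T'" "T' \<in> L"
        "\<forall>d'. 1 \<le> d' \<and> d' < d \<longrightarrow> (\<forall>t. slide up j d' (E ?s) = Some t \<longrightarrow> t \<notin> L)"
        by (auto simp: minimal_slide_def)
      obtain t' where t': "slide up j d ?s = Some t'" "T' = E t'" using d(2) sc by (cases "slide up j d ?s") auto
      have "t' \<in> L'" using e2[OF inT[OF t'(1)]] d(3) t'(2) by simp
      moreover have "\<forall>d'. 1 \<le> d' \<and> d' < d \<longrightarrow> (\<forall>t. slide up j d' ?s = Some t \<longrightarrow> t \<notin> L')"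
      proof (intro allI impI)
        fix d' t assume a: "1 \<le> d' \<and> d' < d" "slide up j d' ?s = Some t"
        have "E t \<notin> L" using d(4) a sc by simp
        thus "t \<notin> L'" using e2[OF inT[OF a(2)]] by simp
      qed
      ultimately show "\<exists>t'. T' = E t' \<and> minimal_slide L' up j ?s t'"
        using t' d(1) by (auto simp: minimal_slide_def)
    next
      assume "\<exists>t'. T' = E t' \<and> minimal_slide L' up j ?s t'"
      then obtain t' d where d: "T' = E t'" "d \<ge> 1" "slide up j d ?s = Some t'" "t' \<in> L'"
        "\<forall>d'. 1 \<le> d' \<and> d' < d \<longrightarrow> (\<forall>t. slide up j d' ?s = Some t \<longrightarrow> t \<notin> L')"
        by (auto simp: minimal_slide_def)
      have "slide up j d (E ?s) = Some T'" using sc d by simp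
      moreover have "T' \<in> L" using e2[OF inT[OF d(3)]] d by simp
      moreover have "\<forall>d'. 1 \<le> d' \<and> d' < d \<longrightarrow> (\<forall>t. slide up j d' (E ?s) = Some t \<longrightarrow> t \<notin> L)"
      proof (intro allI impI)
        fix d' t assume a: "1 \<le> d' \<and> d' < d" "slide up j d' (E ?s) = Some t"
        then obtain t2 where t2: "slide up j d' ?s = Some t2" "t = E t2" using sc by (cases "slide up j d' ?s") auto
        have "t2 \<notin> L'" using d(5) a t2 by blast
        thus "t \<notin> L" using e2[OF inT[OF t2(1)]] t2 by simp
      qed
      ultimately show "minimal_slide L up j (E ?s) T'" using d(2) by (auto simp: minimal_slide_def)
    qed
  qed
  have candn: "\<not> S_cand L V n up T'" for up T'
  proof
    assume "S_cand L V n up T'"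
    hence c: "minimal_slide L up n (E ?s) T'" "T' \<notin> set V" using V(2) by (auto simp: S_cand_def)
    obtain i0 where i0: "i0 \<le> rl ?s" "E ?s = ins n i0 ?s" using e3 by blast
    have "minimal_slide L up n (ins n i0 ?s) T'" using c(1) i0(2) by simp
    from MS1[OF ns i0(1) this] obtain p' where "T' = ins n p' ?s" "p' \<le> rl ?s" "T' \<in> L" by auto
    moreover have "?s \<in> set Vs" using Vs by simp
    ultimately have "T' \<in> set V" using V(1) by auto
    thus False using c(2) by simp
  qed
  have cand: "S_cand L V j up T' \<longleftrightarrow> (\<exists>t'. T' = E t' \<and> S_cand L' Vs j up t')" if jn: "j \<noteq> n" for j up T'
  proof -
    have "S_cand L V j up T' \<longleftrightarrow> minimal_slide L up j (E ?s) T' \<and> T' \<notin> set V"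
      using V(2) by (simp add: S_cand_def)
    also have "\<dots> \<longleftrightarrow> (\<exists>t'. T' = E t' \<and> minimal_slide L' up j ?s t') \<and> T' \<notin> set V"
      using msE[OF jn] by simp
    also have "\<dots> \<longleftrightarrow> (\<exists>t'. T' = E t' \<and> minimal_slide L' up j ?s t' \<and> t' \<notin> set Vs)"
    proof -
      have "\<And>t'. minimal_slide L' up j ?s t' \<Longrightarrow> t' \<in> L'" by (auto simp: minimal_slide_def)
      thus ?thesis using inV by blast
    qed
    finally show ?thesis by (simp add: S_cand_def)
  qed
  have goodn: "\<not> S_good L' Vs n"
  proof
    assume "S_good L' Vs n"
    hence "n \<in> set_tree ?s" by (rule S_good_in)
    thus False using ns by simp
  qed
  have good: "S_good L V j \<longleftrightarrow> S_good L' Vs j" for j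
  proof (cases "j = n")
    case True thus ?thesis using candn goodn by (auto simp: S_good_def)
  next
    case False thus ?thesis using cand[OF False] by (auto simp: S_good_def)
  qed
  have largest: "S_largest L V j \<longleftrightarrow> S_largest L' Vs j" for j
    by (simp add: S_largest_def good)
  from step obtain j up where st: "S_largest L' Vs j" "S_cand L' Vs j up t1"
      "\<not> (\<exists>T''. S_cand L' Vs j (\<not> up) T'')"
    by (auto simp: S_step_def)
  have jn: "j \<noteq> n" using st(1) goodn by (auto simp: S_largest_def)
  have "S_largest L V j" using st(1) largest by simp
  moreover have "S_cand L V j up (E t1)" using cand[OF jn] st(2) by blast
  moreover have "\<not> (\<exists>T''. S_cand L V j (\<not> up) T'')" using cand[OF jn] st(3) by blast
  ultimately show ?thesis unfolding S_step_def by blast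
qed

definition steps :: "nat tree set \<Rightarrow> nat tree list \<Rightarrow> bool" where
  "steps L V \<longleftrightarrow> (\<forall>i. Suc i < length V \<longrightarrow> S_step L (take (Suc i) V) (V ! Suc i))"

lemma steps_append:
  assumes "steps L V" "V \<noteq> [] \<Longrightarrow> S_step L V (hd W)"
    "\<And>j. 0 < j \<Longrightarrow> j < length W \<Longrightarrow> S_step L (V @ take j W) (W ! j)"
  shows "steps L (V @ W)"
  unfolding steps_def
proof (intro allI impI)
  fix i assume i: "Suc i < length (V @ W)"
  consider "Suc i < length V" | "Suc i = length V" | "length V < Suc i" by linarith
  then show "S_step L (take (Suc i) (V @ W)) ((V @ W) ! Suc i)"
  proof cases
    case 1 thus ?thesis using assms(1) by (simp add: steps_def nth_append)
  next
    case 2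
    hence "V \<noteq> []" "W \<noteq> []" using i by auto
    thus ?thesis using assms(2) 2 by (simp add: nth_append hd_conv_nth)
  next
    case 3
    define j where "j = Suc i - length V"
    have j: "0 < j" "j < length W" using 3 i by (auto simp: j_def)
    have "take (Suc i) (V @ W) = V @ take j W" using 3 by (simp add: j_def)
    moreover have "(V @ W) ! Suc i = W ! j" using 3 by (simp add: j_def nth_append)
    ultimately show ?thesis using assms(3)[OF j] by simp
  qed
qed

fun rpath :: "nat list \<Rightarrow> nat tree" where
  "rpath [] = Leaf"
| "rpath (x # xs) = Node Leaf x (rpath xs)"

definition rp :: "nat \<Rightarrow> nat tree" where "rp n = rpath [1..<Suc n]"

lemma rl_rpath: "rl (rpath xs) = length xs"
  by (induction xs) auto

lemma ins_rpath: "ins a (length xs) (rpath xs) = rpath (xs @ [a])"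
  by (induction xs) auto

lemma rp_Suc: "rp (Suc n) = ins (Suc n) (rl (rp n)) (rp n)"
  unfolding rp_def rl_rpath using ins_rpath[of "Suc n" "[1..<Suc n]"] by simp

lemma noleft: "(\<forall>i. cL t i = None) \<Longrightarrow> dist t \<Longrightarrow> t = rpath (inorder t)"
proof (induction t)
  case Leaf thus ?case by simp
next
  case (Node l x r)
  have "cL (Node l x r) x = None" using Node.prems by blast
  hence l: "l = Leaf" by (cases l) (auto simp: cL_Node)
  have "\<forall>i. cL r i = None"
  proof
    fix i show "cL r i = None"
    proof (cases "i \<in> set_tree r")
      case True
      hence "i \<noteq> x" using Node.prems(2) by auto
      thus ?thesis using Node.prems(1) l by (metis cL_Node empty_iff tree.set(1))
    next
      case False thus ?thesis by (simp add: cL_def)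
    qed
  qed
  hence "r = rpath (inorder r)" using Node.IH(2) Node.prems(2) by simp
  thus ?case using l by simp
qed

lemma avoiding_0:
  assumes F: "\<forall>pe\<in>set pats. friendly pe"
  shows "avoiding 0 pats = {Leaf}"
proof -
  have T0: "Tn 0 = {Leaf}" by (auto simp: Tn_def)
  have "\<not> contains Leaf pe" if pe: "pe \<in> set pats" for pe
  proof
    obtain P e where pe': "pe = (P,e)" by (cases pe)
    obtain l x r k where "P = Node l x r" using friendly_facts[of P e] F pe pe' by metis
    moreover assume "contains Leaf pe"
    then obtain f where "emb Leaf P e f" using pe' by (auto simp: contains_emb)
    ultimately show False by (auto simp: emb_def)
  qed
  thus ?thesis using T0 by (auto simp: avoiding_def)
qed

lemma main:
  assumes F: "\<forall>pe\<in>set pats. friendly pe"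
  shows "\<exists>xs. S_run (avoiding n pats) (rp n) xs \<and> distinct xs \<and> set xs = avoiding n pats"
proof (induction n)
  case 0
  have "S_run (avoiding 0 pats) (rp 0) [Leaf]"
    unfolding S_run_def using S_stop_full[of "[Leaf]" "avoiding 0 pats"] avoiding_0[OF F]
    by (simp add: rp_def)
  thus ?case using avoiding_0[OF F] by auto
next
  case (Suc n')
  let ?n = "Suc n'"
  let ?L = "avoiding ?n pats"
  let ?L' = "avoiding n' pats"
  from Suc.IH obtain xs' where IH: "S_run ?L' (rp n') xs'" "distinct xs'" "set xs' = ?L'" by blast
  define xs where "xs = zz ?L ?n True xs'"
  have ne: "xs' \<noteq> []" "hd xs' = rp n'" using IH(1) by (auto simp: S_run_def)
  have stepsL': "\<And>i. Suc i < length xs' \<Longrightarrow> S_step ?L' (take (Suc i) xs') (xs' ! Suc i)"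
    using IH(1) by (auto simp: S_run_def)
  have ends: "\<And>t. t \<in> ?L' \<Longrightarrow> ins ?n 0 t \<in> ?L \<and> ins ?n (rl t) t \<in> ?L"
    using L_ins0[OF F] L_bot[OF F] by blast
  have memT: "\<And>t. t \<in> ?L' \<Longrightarrow> t \<in> Tn n'" using avoiding_Tn by blast
  have setxs: "set xs = ?L"
  proof
    show "set xs \<subseteq> ?L" unfolding xs_def set_zz by auto
  next
    show "?L \<subseteq> set xs"
    proof
      fix T assume T: "T \<in> ?L"
      obtain t i where ti: "t \<in> Tn n'" "i \<le> rl t" "T = ins ?n i t"
        using Tn_decomp[OF avoiding_Tn[OF T]] by blast
      have "t \<in> ?L'" using L_del[OF F ti(1,2)] T ti(3) by simp
      thus "T \<in> set xs" unfolding xs_def set_zz using IH(3) ti T by auto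
    qed
  qed
  obtain t0 rest where xs': "xs' = t0 # rest" using ne by (cases xs') auto
  have t0: "t0 = rp n'" "t0 \<in> ?L'" using ne xs' IH(3) by auto
  note pe0 = pos_ends[OF conjunct1[OF ends[OF t0(2)]] conjunct2[OF ends[OF t0(2)]]]
  have xseq: "xs = sw ?L ?n True t0 @ zz ?L ?n False rest" using xs' by (simp add: xs_def)
  have swne: "sw ?L ?n True t0 \<noteq> []" using pe0(1) by (simp add: sw_def)
  have xsne: "xs \<noteq> []" using xseq swne by simp
  have hdxs: "hd xs = rp ?n"
  proof -
    have "hd xs = hd (sw ?L ?n True t0)" using xseq swne by simp
    also have "\<dots> = ins ?n (rl t0) t0" using pe0(1,2) by (simp add: sw_def hd_map)
    also have "\<dots> = rp ?n" using rp_Suc t0(1) by simp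
    finally show ?thesis .
  qed
  have allsteps: "k \<le> length xs' \<Longrightarrow> steps ?L (zz ?L ?n True (take k xs'))" for k
  proof (induction k)
    case 0 thus ?case by (simp add: steps_def)
  next
    case (Suc k)
    hence k: "k < length xs'" by simp
    let ?t = "xs' ! k"
    let ?V = "zz ?L ?n True (take k xs')"
    let ?W = "sw ?L ?n (even k) ?t"
    have tk: "take (Suc k) xs' = take k xs' @ [?t]" using take_Suc_conv_app_nth[OF k] .
    have eq: "zz ?L ?n True (take (Suc k) xs') = ?V @ ?W"
      unfolding tk zz_append using k by simp
    have tL: "?t \<in> ?L'" using IH(3) k nth_mem by blast
    have tT: "?t \<in> Tn n'" using memT tL by blast
    note peT = pos_ends[OF conjunct1[OF ends[OF tL]] conjunct2[OF ends[OF tL]]]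
    have tnot: "?t \<notin> set (take k xs')" using distinct_nth_take[OF IH(2) k] .
    have V0: "\<forall>T \<in> set ?V. \<forall>i \<le> rl ?t. T \<noteq> ins ?n i ?t"
    proof (intro ballI allI impI)
      fix T i assume a: "T \<in> set ?V" "i \<le> rl ?t"
      then obtain t'' i' where b: "t'' \<in> set (take k xs')" "i' \<le> rl t''" "T = ins ?n i' t''"
        by (auto simp: set_zz)
      show "T \<noteq> ins ?n i ?t"
      proof
        assume "T = ins ?n i ?t"
        hence "t'' = ?t" using ins_inj[OF b(2) a(2)] b(3) by simp
        thus False using b(1) tnot by simp
      qed
    qed
    have "steps ?L (?V @ ?W)"
    proof (rule steps_append)
      show "steps ?L ?V" using Suc.IH Suc.prems by simp
    next
      fix j assume "0 < j" "j < length ?W"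
      thus "S_step ?L (?V @ take j ?W) (?W ! j)" using WS[OF tT refl V0] by blast
    next
      assume Vne: "?V \<noteq> []"
      have k1: "k \<ge> 1" using Vne by (cases k) auto
      let ?Vs = "take k xs'"
      let ?tp = "xs' ! (k - 1)"
      have Vs1: "?Vs \<noteq> []" using k1 k by auto
      have "set ?Vs \<subseteq> set xs'" by (rule set_take_subset)
      hence Vs2: "set ?Vs \<subseteq> ?L'" using IH(3) by simp
      note Vs = Vs1 Vs2
      have tk': "?Vs = take (k - 1) xs' @ [?tp]" using take_Suc_conv_app_nth[of "k-1" xs'] k k1 by simp
      have lastVs: "last ?Vs = ?tp" using tk' by simp
      have t0L: "?tp \<in> ?L'" using IH(3) k nth_mem[of "k - 1" xs'] by simp
      note pe0' = pos_ends[OF conjunct1[OF ends[OF t0L]] conjunct2[OF ends[OF t0L]]]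
      have "?V = zz ?L ?n True (take (k - 1) xs') @ zz ?L ?n (even (k - 1)) [?tp]"
        apply (subst tk') apply (subst zz_append) using k by simp
      hence Veq: "?V = zz ?L ?n True (take (k - 1) xs') @ sw ?L ?n (even (k - 1)) ?tp" by simp
      have stepk: "S_step ?L' ?Vs ?t" using stepsL'[of "k - 1"] k k1 by simp
      have setV: "set ?V = {ins ?n i t | t i. t \<in> set ?Vs \<and> i \<le> rl t \<and> ins ?n i t \<in> ?L}"
        by (simp add: set_zz)
      show "S_step ?L ?V (hd ?W)"
      proof (cases "even k")
        case True
        hence ok: "\<not> even (k - 1)" using k1 by simp
        have swn: "sw ?L ?n False ?tp \<noteq> []" using pe0'(4) by (simp add: sw_def)
        have "last ?V = last (sw ?L ?n False ?tp)" using Veq ok swn by simp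
        also have "\<dots> = ins ?n (rl ?tp) ?tp" using pe0'(4,6) by (simp add: sw_def last_map)
        finally have lv: "last ?V = bot ?n (last ?Vs)" using lastVs by (simp add: bot_ins)
        have hw: "hd ?W = bot ?n ?t" using True peT(1,2) by (simp add: sw_def hd_map bot_ins)
        have e2: "bot ?n s \<in> ?L \<longleftrightarrow> s \<in> ?L'" if s: "s \<in> Tn n'" for s
          using L_del[OF F s le_refl] L_bot[OF F] by (auto simp: bot_ins)
        have e3: "\<exists>i \<le> rl s. bot ?n s = ins ?n i s" for s by (auto simp: bot_ins)
        show ?thesis unfolding hw
          by (rule BS[OF refl refl Vs setV lv rot_bot e2 e3 stepk])
      next
        case False
        hence ok: "even (k - 1)" using k1 by simp
        have swn: "sw ?L ?n True ?tp \<noteq> []" using pe0'(1) by (simp add: sw_def)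
        have "last ?V = last (sw ?L ?n True ?tp)" using Veq ok swn by simp
        also have "\<dots> = ins ?n 0 ?tp" using pe0'(1,3) by (simp add: sw_def last_map)
        finally have lv: "last ?V = ins ?n 0 (last ?Vs)" using lastVs by simp
        have hw: "hd ?W = ins ?n 0 ?t" using False peT(4,5) by (simp add: sw_def hd_map)
        have e2: "ins ?n 0 s \<in> ?L \<longleftrightarrow> s \<in> ?L'" if s: "s \<in> Tn n'" for s
          using L_del[OF F s, of 0] L_ins0[OF F] by auto
        have e3: "\<exists>i \<le> rl s. ins ?n 0 s = ins ?n i s" for s by auto
        show ?thesis unfolding hw
          by (rule BS[OF refl refl Vs setV lv rot_ins0 e2 e3 stepk])
      qed
    qed
    thus ?case using eq by simp
  qed
  have st: "steps ?L xs" using allsteps[of "length xs'"] by (simp add: xs_def)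
  have "S_run ?L (rp ?n) xs" unfolding S_run_def
    using xsne hdxs st S_stop_full[OF setxs] by (simp add: steps_def)
  thus ?case using distinct_zz[OF IH(2)] setxs xs_def by blast
qed


theorem theorem3:
  fixes pats :: "pattern list" and n :: nat and T0 :: "nat tree"
  assumes "\<forall>pe \<in> set pats. friendly pe"
    and "T0 \<in> Tn n"
    and "\<forall>i. cL T0 i = None"
  shows "\<exists>xs. S_run (avoiding n pats) T0 xs \<and> distinct xs \<and> set xs = avoiding n pats"
proof -
  have "T0 = rpath (inorder T0)" using noleft[OF assms(3) Tn_dist[OF assms(2)]] .
  also have "inorder T0 = [1..<Suc n]" using assms(2) by (simp add: Tn_def)
  finally have "T0 = rp n" by (simp add: rp_def)
  thus ?thesis using main[OF assms(1)] by simp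
qed

end
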